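(* Let $\eta,\epsilon>0$ and let $\mu$ be a distribution over $\{-1,+1\}^n$ satisfying $$\mu^{\min}_{-1}:=\min_{v\in[n]}\min_{\sigma\in\Omega(\mu_{[n]\setminus\{v\}})}\mu_v^\sigma(-1)>0.$$ Let $k_0=10(1+\epsilon)/\mu^{\min}_{-1}$. If $\mu$ has $(\eta,\epsilon)$-complete limited correlation, then for every integer $k\ge k_0$, the $k$-transformation $\mu_k=\mathrm{Rd}(\mu,k)$ is $(2\eta+3,\epsilon)$-completely spectrally independent.
   Context: For a distribution $\nu$ on $\{-1,+1\}^N$ ($N$ finite index set): $\Omega(\nu)$ support, $\nu_\Lambda$ marginal, $\nu^\sigma$ conditional given $\sigma\in\Omega(\nu_\Lambda)$, $\nu^{\sigma\wedge i\gets x}$ further conditioned on coordinate $i$ equal $x$, $\nu^{i\gets x}$ conditioned only on coordinate $i$. $(\boldsymbol\lambda*\nu)(\sigma)\propto\nu(\sigma)\prod_{i:\sigma_i=+1}\lambda_i$. Spectral independence: $\nu$ is $\eta$-spectrally independent if for all $\Lambda$, $\sigma\in\Omega(\nu_\Lambda)$ the spectral radius of $\Psi_{\nu^\sigma}(i,j)=\max_{x,y\in\Omega(\nu^\sigma_i)}d_{\mathrm{TV}}(\nu_j^{\sigma\wedge i\gets x},\nu_j^{\sigma\wedge i\gets y})$ is $\le\eta$; $(\eta,\epsilon)$-completely spectrally independent if this holds for $(\boldsymbol\lambda*\nu)$ for all $\boldsymbol\lambda\in(0,1+\epsilon]^N$. Correlation: $\Psi^{\mathrm{Cor}}_\nu(i,i)=\nu_i(-1)$;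 for $i\ne j$, $\Psi^{\mathrm{Cor}}_\nu(i,j)=\nu_j^{i\gets+1}(+1)-\nu_j(+1)$ if $+1\in\Omega(\nu_i)$, else $0$; $\Psi^{\mathrm{AbsCor}}_\nu=|\Psi^{\mathrm{Cor}}_\nu|$ entrywise. $\nu$ has $\eta$-limited correlation if the spectral radius of $\Psi^{\mathrm{AbsCor}}_{\nu^\sigma}$ is $\le\eta$ for all $\Lambda,\sigma\in\Omega(\nu_\Lambda)$; $(\eta,\epsilon)$-complete limited correlation if $(\boldsymbol\lambda*\nu)$ has $\eta$-limited correlation for all $\boldsymbol\lambda\in(0,1+\epsilon]^N$. $k$-transformation: $\mathrm{Rd}(\mu,k)$ is the law of $Y\in\{-1,+1\}^{[n]\times[k]}$ from $X\sim\mu$: if $X_i=-1$, $Y_{(i,j)}=-1$ for all $j$; if $X_i=+1$, $Y_{(i,j^* )}=+1$ and others $-1$, with $j^*$ uniform in $[k]$ independently. *)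

theory Defs
  imports Complex_Main
begin

definition cube :: "'i set \<Rightarrow> ('i \<Rightarrow> int) set" where
  "cube N = {\<sigma>. (\<forall>i\<in>N. \<sigma> i = -1 \<or> \<sigma> i = 1) \<and> (\<forall>i. i \<notin> N \<longrightarrow> \<sigma> i = 0)}"

definition is_dist :: "'i set \<Rightarrow> (('i \<Rightarrow> int) \<Rightarrow> real) \<Rightarrow> bool" where
  "is_dist N \<nu> \<longleftrightarrow> finite N \<and> (\<forall>\<sigma>. 0 \<le> \<nu> \<sigma>) \<and> (\<forall>\<sigma>. \<sigma> \<notin> cube N \<longrightarrow> \<nu> \<sigma> = 0)
      \<and> sum \<nu> (cube N) = 1"

definition restr :: "('i \<Rightarrow> int) \<Rightarrow> 'i set \<Rightarrow> ('i \<Rightarrow> int)" where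
  "restr \<sigma> \<Lambda> = (\<lambda>i. if i \<in> \<Lambda> then \<sigma> i else 0)"

definition prob :: "'i set \<Rightarrow> (('i \<Rightarrow> int) \<Rightarrow> real) \<Rightarrow> (('i \<Rightarrow> int) \<Rightarrow> bool) \<Rightarrow> real" where
  "prob N \<nu> E = (\<Sum>\<sigma>\<in>cube N. if E \<sigma> then \<nu> \<sigma> else 0)"

definition marg :: "'i set \<Rightarrow> (('i \<Rightarrow> int) \<Rightarrow> real) \<Rightarrow> 'i set \<Rightarrow> ('i \<Rightarrow> int) \<Rightarrow> real" where
  "marg N \<nu> \<Lambda> \<tau> = prob N \<nu> (\<lambda>\<sigma>. restr \<sigma> \<Lambda> = \<tau>)"

definition supp_marg :: "'i set \<Rightarrow> (('i \<Rightarrow> int) \<Rightarrow> real) \<Rightarrow> 'i set \<Rightarrow> ('i \<Rightarrow> int) set" where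
  "supp_marg N \<nu> \<Lambda> = {\<tau> \<in> cube \<Lambda>. marg N \<nu> \<Lambda> \<tau> > 0}"

definition cond :: "'i set \<Rightarrow> (('i \<Rightarrow> int) \<Rightarrow> real) \<Rightarrow> (('i \<Rightarrow> int) \<Rightarrow> bool) \<Rightarrow> (('i \<Rightarrow> int) \<Rightarrow> real)" where
  "cond N \<nu> E = (\<lambda>\<sigma>. if E \<sigma> then \<nu> \<sigma> / prob N \<nu> E else 0)"

definition pin :: "'i set \<Rightarrow> (('i \<Rightarrow> int) \<Rightarrow> real) \<Rightarrow> 'i set \<Rightarrow> ('i \<Rightarrow> int) \<Rightarrow> (('i \<Rightarrow> int) \<Rightarrow> real)" where
  "pin N \<nu> \<Lambda> \<tau> = cond N \<nu> (\<lambda>\<sigma>. restr \<sigma> \<Lambda> = \<tau>)"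

definition supp1 :: "'i set \<Rightarrow> (('i \<Rightarrow> int) \<Rightarrow> real) \<Rightarrow> 'i \<Rightarrow> int set" where
  "supp1 N \<nu> i = {x \<in> {-1, 1}. prob N \<nu> (\<lambda>\<sigma>. \<sigma> i = x) > 0}"

definition tv_coord :: "'i set \<Rightarrow> (('i \<Rightarrow> int) \<Rightarrow> real) \<Rightarrow> (('i \<Rightarrow> int) \<Rightarrow> real) \<Rightarrow> 'i \<Rightarrow> real" where
  "tv_coord N \<nu> \<rho> j = (1/2) * (\<Sum>y\<in>{-1, 1::int}. \<bar>prob N \<nu> (\<lambda>\<sigma>. \<sigma> j = y) - prob N \<rho> (\<lambda>\<sigma>. \<sigma> j = y)\<bar>)"

definition Psi :: "'i set \<Rightarrow> (('i \<Rightarrow> int) \<Rightarrow> real) \<Rightarrow> 'i \<Rightarrow> 'i \<Rightarrow> real" where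
  "Psi N \<nu> i j = Max ((\<lambda>(x, y). tv_coord N (cond N \<nu> (\<lambda>\<sigma>. \<sigma> i = x)) (cond N \<nu> (\<lambda>\<sigma>. \<sigma> i = y)) j)
                        ` (supp1 N \<nu> i \<times> supp1 N \<nu> i))"

definition spec_radius :: "'i set \<Rightarrow> ('i \<Rightarrow> 'i \<Rightarrow> real) \<Rightarrow> real" where
  "spec_radius S M = Sup (insert 0 {cmod c | c. \<exists>v :: 'i \<Rightarrow> complex. (\<exists>i\<in>S. v i \<noteq> 0) \<and>
       (\<forall>i\<in>S. (\<Sum>j\<in>S. complex_of_real (M i j) * v j) = c * v i)})"

definition spectrally_independent :: "'i set \<Rightarrow> real \<Rightarrow> (('i \<Rightarrow> int) \<Rightarrow> real) \<Rightarrow> bool" where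
  "spectrally_independent N \<eta> \<nu> \<longleftrightarrow>
     (\<forall>\<Lambda>. \<Lambda> \<subseteq> N \<longrightarrow> (\<forall>\<tau>\<in>supp_marg N \<nu> \<Lambda>. spec_radius (N - \<Lambda>) (Psi N (pin N \<nu> \<Lambda> \<tau>)) \<le> \<eta>))"

definition tilt :: "'i set \<Rightarrow> ('i \<Rightarrow> real) \<Rightarrow> (('i \<Rightarrow> int) \<Rightarrow> real) \<Rightarrow> (('i \<Rightarrow> int) \<Rightarrow> real)" where
  "tilt N lam \<nu> = (\<lambda>\<sigma>. \<nu> \<sigma> * (\<Prod>i\<in>{i\<in>N. \<sigma> i = 1}. lam i) /
       (\<Sum>\<sigma>'\<in>cube N. \<nu> \<sigma>' * (\<Prod>i\<in>{i\<in>N. \<sigma>' i = 1}. lam i)))"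

definition completely_SI :: "'i set \<Rightarrow> real \<Rightarrow> real \<Rightarrow> (('i \<Rightarrow> int) \<Rightarrow> real) \<Rightarrow> bool" where
  "completely_SI N \<eta> \<epsilon> \<nu> \<longleftrightarrow>
     (\<forall>lam. (\<forall>i\<in>N. 0 < lam i \<and> lam i \<le> 1 + \<epsilon>) \<longrightarrow> spectrally_independent N \<eta> (tilt N lam \<nu>))"

definition PsiCor :: "'i set \<Rightarrow> (('i \<Rightarrow> int) \<Rightarrow> real) \<Rightarrow> 'i \<Rightarrow> 'i \<Rightarrow> real" where
  "PsiCor N \<nu> i j =
     (if i = j then prob N \<nu> (\<lambda>\<sigma>. \<sigma> i = -1)
      else if 1 \<in> supp1 N \<nu> i
           then prob N (cond N \<nu> (\<lambda>\<sigma>. \<sigma> i = 1)) (\<lambda>\<sigma>. \<sigma> j = 1) - prob N \<nu> (\<lambda>\<sigma>. \<sigma> j = 1)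
           else 0)"

definition PsiAbsCor :: "'i set \<Rightarrow> (('i \<Rightarrow> int) \<Rightarrow> real) \<Rightarrow> 'i \<Rightarrow> 'i \<Rightarrow> real" where
  "PsiAbsCor N \<nu> i j = \<bar>PsiCor N \<nu> i j\<bar>"

definition limited_correlation :: "'i set \<Rightarrow> real \<Rightarrow> (('i \<Rightarrow> int) \<Rightarrow> real) \<Rightarrow> bool" where
  "limited_correlation N \<eta> \<nu> \<longleftrightarrow>
     (\<forall>\<Lambda>. \<Lambda> \<subseteq> N \<longrightarrow> (\<forall>\<tau>\<in>supp_marg N \<nu> \<Lambda>. spec_radius (N - \<Lambda>) (PsiAbsCor N (pin N \<nu> \<Lambda> \<tau>)) \<le> \<eta>))"

definition complete_limited_correlation :: "'i set \<Rightarrow> real \<Rightarrow> real \<Rightarrow> (('i \<Rightarrow> int) \<Rightarrow> real) \<Rightarrow> bool" where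
  "complete_limited_correlation N \<eta> \<epsilon> \<nu> \<longleftrightarrow>
     (\<forall>lam. (\<forall>i\<in>N. 0 < lam i \<and> lam i \<le> 1 + \<epsilon>) \<longrightarrow> limited_correlation N \<eta> (tilt N lam \<nu>))"

definition Rd :: "'i set \<Rightarrow> (('i \<Rightarrow> int) \<Rightarrow> real) \<Rightarrow> nat \<Rightarrow> (('i \<times> nat \<Rightarrow> int) \<Rightarrow> real)" where
  "Rd N \<mu> k = (\<lambda>Y.
     if Y \<in> cube (N \<times> {1..k}) \<and> (\<forall>i\<in>N. card {j\<in>{1..k}. Y (i, j) = 1} \<le> 1)
     then (let X = (\<lambda>i. if i \<in> N then (if \<exists>j\<in>{1..k}. Y (i, j) = 1 then 1 else -1) else 0)
           in \<mu> X * (1 / real k) ^ card {i\<in>N. X i = 1})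
     else 0)"

definition mu_min_neg :: "'i set \<Rightarrow> (('i \<Rightarrow> int) \<Rightarrow> real) \<Rightarrow> real" where
  "mu_min_neg N \<mu> = Min (\<Union>v\<in>N. (\<lambda>\<tau>. prob N (pin N \<mu> (N - {v}) \<tau>) (\<lambda>\<sigma>. \<sigma> v = -1))
                                 ` supp_marg N \<mu> (N - {v}))"

end

theory Submission
  imports Defs "Jordan_Normal_Form.Spectral_Radius" "HOL-Library.FuncSet"
begin

definition is_eig :: "'i set \<Rightarrow> ('i \<Rightarrow> 'i \<Rightarrow> real) \<Rightarrow> complex \<Rightarrow> bool" where
  "is_eig S M c \<longleftrightarrow> (\<exists>v :: 'i \<Rightarrow> complex. (\<exists>i\<in>S. v i \<noteq> 0) \<and>
       (\<forall>i\<in>S. (\<Sum>j\<in>S. complex_of_real (M i j) * v j) = c * v i))"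

lemma spec_radius_alt: "spec_radius S M = Sup (insert 0 {cmod c | c. is_eig S M c})"
  unfolding spec_radius_def is_eig_def by simp

lemma finite_argmax:
  assumes "finite S" "S \<noteq> {}"
  obtains i0 where "i0 \<in> S" "\<forall>j\<in>S. (f j :: real) \<le> f i0"
proof -
  have "Max (f ` S) \<in> f ` S" using assms by auto
  then obtain i0 where "i0 \<in> S" "f i0 = Max (f ` S)" by auto
  moreover have "\<forall>j\<in>S. f j \<le> Max (f ` S)" using assms by auto
  ultimately show ?thesis using that by auto
qed

lemma eig_bound:
  assumes S: "finite S" and e: "is_eig S M c"
  shows "cmod c \<le> (\<Sum>i\<in>S. \<Sum>j\<in>S. \<bar>M i j\<bar>)"
proof -
  obtain v where nz: "\<exists>i\<in>S. v i \<noteq> 0" and ev: "\<forall>i\<in>S. (\<Sum>j\<in>S. complex_of_real (M i j) * v j) = c * v i"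
    using e unfolding is_eig_def by blast
  have ne: "S \<noteq> {}" using nz by auto
  obtain i0 where i0: "i0 \<in> S" "\<forall>j\<in>S. cmod (v j) \<le> cmod (v i0)"
    using finite_argmax[OF S ne, of "\<lambda>i. cmod (v i)"] by blast
  have pos: "cmod (v i0) > 0" using nz i0 by (metis norm_le_zero_iff not_less order.trans)
  have "cmod c * cmod (v i0) = cmod (\<Sum>j\<in>S. complex_of_real (M i0 j) * v j)"
    using ev i0(1) by (simp add: norm_mult)
  also have "\<dots> \<le> (\<Sum>j\<in>S. \<bar>M i0 j\<bar> * cmod (v j))"
    by (rule order.trans[OF norm_sum]) (simp add: norm_mult)
  also have "\<dots> \<le> (\<Sum>j\<in>S. \<bar>M i0 j\<bar> * cmod (v i0))"
    by (rule sum_mono) (simp add: i0(2) mult_left_mono)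
  also have "\<dots> = (\<Sum>j\<in>S. \<bar>M i0 j\<bar>) * cmod (v i0)" by (simp add: sum_distrib_right)
  finally have "cmod c \<le> (\<Sum>j\<in>S. \<bar>M i0 j\<bar>)" using pos by simp
  also have "\<dots> \<le> (\<Sum>i\<in>S. \<Sum>j\<in>S. \<bar>M i j\<bar>)"
    by (rule member_le_sum[OF i0(1)]) (auto intro: sum_nonneg S)
  finally show ?thesis .
qed

lemma le_spec_radius:
  assumes S: "finite S" and e: "is_eig S M c"
  shows "cmod c \<le> spec_radius S M"
  unfolding spec_radius_alt
proof (rule cSup_upper)
  show "cmod c \<in> insert 0 {cmod c |c. is_eig S M c}" using e by auto
  show "bdd_above (insert 0 {cmod c |c. is_eig S M c})"
    by (rule bdd_aboveI[where M="max 0 (\<Sum>i\<in>S. \<Sum>j\<in>S. \<bar>M i j\<bar>)"])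
       (use eig_bound[OF S] in \<open>force simp: le_max_iff_disj\<close>)
qed

lemma spec_radius_le:
  assumes "\<And>c. is_eig S M c \<Longrightarrow> cmod c \<le> B" and "0 \<le> B"
  shows "spec_radius S M \<le> B"
  unfolding spec_radius_alt
  by (rule cSup_least) (use assms in auto)

lemma sum_reindex_e:
  assumes e: "bij_betw e {0..<n} S"
  shows "(\<Sum>y\<in>S. g y) = (\<Sum>q\<in>{0..<n}. g (e q))"
  using sum.reindex_bij_betw[OF e, of g] by simp

lemma CW_bridge1:
  fixes M :: "'i \<Rightarrow> 'i \<Rightarrow> real"
  assumes e: "bij_betw e {0..<n} S" and s: "s > 0"
    and ev: "eigenvalue (mat n n (\<lambda>(p,q). complex_of_real (M (e p) (e q) / s))) \<kappa>"
  shows "is_eig S M (of_real s * \<kappa>)"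
proof -
  let ?A = "mat n n (\<lambda>(p,q). complex_of_real (M (e p) (e q) / s))"
  obtain v where v: "v \<in> carrier_vec n" "v \<noteq> 0\<^sub>v n" "?A *\<^sub>v v = \<kappa> \<cdot>\<^sub>v v"
    using ev unfolding eigenvalue_def eigenvector_def by auto
  define ie where "ie = the_inv_into {0..<n} e"
  have ie: "\<And>p. p < n \<Longrightarrow> ie (e p) = p" unfolding ie_def
    using e by (meson atLeastLessThan_iff bij_betw_def the_inv_into_f_f zero_le)
  define w where "w x = v $ ie x" for x
  have dv: "dim_vec v = n" using v by auto
  obtain p0 where p0: "p0 < n" "v $ p0 \<noteq> 0"
    using v(2) dv by (metis index_zero_vec(1) eq_vecI index_zero_vec(2))
  have eS: "\<And>p. p < n \<Longrightarrow> e p \<in> S" using e by (auto simp: bij_betw_def)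
  show ?thesis unfolding is_eig_def
  proof (intro exI conjI ballI)
    show "\<exists>i\<in>S. w i \<noteq> 0" using p0 eS ie unfolding w_def by force
    fix x assume x: "x \<in> S"
    then obtain p where p: "p < n" "x = e p" using e by (auto simp: bij_betw_def image_iff)
    have "(\<Sum>j\<in>S. complex_of_real (M x j) * w j) = (\<Sum>q\<in>{0..<n}. complex_of_real (M (e p) (e q)) * v $ q)"
      unfolding sum_reindex_e[OF e] w_def p(2) by (rule sum.cong) (auto simp: ie)
    also have "\<dots> = of_real s * (\<Sum>q\<in>{0..<n}. complex_of_real (M (e p) (e q) / s) * v $ q)"
      using s by (simp add: sum_distrib_left)
    also have "(\<Sum>q\<in>{0..<n}. complex_of_real (M (e p) (e q) / s) * v $ q) = (?A *\<^sub>v v) $ p"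
      using p dv by (simp add: scalar_prod_def)
    also have "\<dots> = \<kappa> * v $ p" using v(3) p dv by simp
    finally show "(\<Sum>j\<in>S. complex_of_real (M x j) * w j) = of_real s * \<kappa> * w x"
      unfolding w_def p(2) using ie[OF p(1)] by simp
  qed
qed

lemma CW_bridge2:
  fixes M :: "'i \<Rightarrow> 'i \<Rightarrow> real"
  assumes e: "bij_betw e {0..<n} S" and ev: "is_eig S M c"
  shows "eigenvalue (mat n n (\<lambda>(p,q). complex_of_real (M (e p) (e q) / 1))) c"
proof -
  let ?A = "mat n n (\<lambda>(p,q). complex_of_real (M (e p) (e q) / 1))"
  obtain w where nz: "\<exists>i\<in>S. w i \<noteq> 0" and ew: "\<forall>i\<in>S. (\<Sum>j\<in>S. complex_of_real (M i j) * w j) = c * w i"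
    using ev unfolding is_eig_def by blast
  define v where "v = vec n (\<lambda>p. w (e p))"
  obtain x0 where x0: "x0 \<in> S" "w x0 \<noteq> 0" using nz by auto
  then obtain p0 where p0: "p0 < n" "x0 = e p0" using e by (auto simp: bij_betw_def image_iff)
  have eS: "\<And>p. p < n \<Longrightarrow> e p \<in> S" using e by (auto simp: bij_betw_def)
  have "eigenvector ?A v c" unfolding eigenvector_def
  proof (intro conjI)
    show "v \<in> carrier_vec (dim_row ?A)" by (simp add: v_def)
    show "v \<noteq> 0\<^sub>v (dim_row ?A)"
    proof
      assume "v = 0\<^sub>v (dim_row ?A)"
      then have "v $ p0 = 0" using p0 by simp
      then show False using p0 x0 by (simp add: v_def)
    qed
    show "?A *\<^sub>v v = c \<cdot>\<^sub>v v"
    proof (rule eq_vecI)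
      show "dim_vec (?A *\<^sub>v v) = dim_vec (c \<cdot>\<^sub>v v)" by (simp add: v_def)
      fix p assume "p < dim_vec (c \<cdot>\<^sub>v v)"
      then have p: "p < n" by (simp add: v_def)
      have "(?A *\<^sub>v v) $ p = (\<Sum>q\<in>{0..<n}. complex_of_real (M (e p) (e q)) * w (e q))"
        using p by (simp add: scalar_prod_def v_def)
      also have "\<dots> = (\<Sum>j\<in>S. complex_of_real (M (e p) j) * w j)"
        unfolding sum_reindex_e[OF e] ..
      also have "\<dots> = c * w (e p)" using ew eS[OF p] by simp
      finally show "(?A *\<^sub>v v) $ p = (c \<cdot>\<^sub>v v) $ p" using p by (simp add: v_def)
    qed
  qed
  then show ?thesis unfolding eigenvalue_def by blast
qed

definition Mapp :: "'i set \<Rightarrow> ('i \<Rightarrow> 'i \<Rightarrow> real) \<Rightarrow> real \<Rightarrow> ('i \<Rightarrow> real) \<Rightarrow> ('i \<Rightarrow> real)" where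
  "Mapp S M s w = (\<lambda>x. \<Sum>y\<in>S. M x y / s * w y)"

fun Mit :: "'i set \<Rightarrow> ('i \<Rightarrow> 'i \<Rightarrow> real) \<Rightarrow> real \<Rightarrow> nat \<Rightarrow> ('i \<Rightarrow> real) \<Rightarrow> ('i \<Rightarrow> real)" where
  "Mit S M s 0 w = w"
| "Mit S M s (Suc k) w = Mit S M s k (Mapp S M s w)"

lemma Mit_comm: "Mit S M s (Suc k) w = Mapp S M s (Mit S M s k w)"
  by (induction k arbitrary: w) auto

lemma Mit_mat:
  assumes e: "bij_betw e {0..<n} S"
  shows "(mat n n (\<lambda>(p,q). complex_of_real (M (e p) (e q) / s)) ^\<^sub>m k) *\<^sub>v vec n (\<lambda>p. complex_of_real (w (e p)))
       = vec n (\<lambda>p. complex_of_real (Mit S M s k w (e p)))"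
proof (induction k arbitrary: w)
  case 0
  show ?case by simp
next
  case (Suc k)
  let ?A = "mat n n (\<lambda>(p,q). complex_of_real (M (e p) (e q) / s))"
  have "?A *\<^sub>v vec n (\<lambda>p. complex_of_real (w (e p))) = vec n (\<lambda>p. complex_of_real (Mapp S M s w (e p)))"
  proof (rule eq_vecI)
    fix p assume "p < dim_vec (vec n (\<lambda>p. complex_of_real (Mapp S M s w (e p))))"
    then have p: "p < n" by simp
    have "(?A *\<^sub>v vec n (\<lambda>p. complex_of_real (w (e p)))) $ p
        = (\<Sum>q\<in>{0..<n}. complex_of_real (M (e p) (e q) / s) * complex_of_real (w (e q)))"
      using p by (simp add: scalar_prod_def)
    also have "\<dots> = complex_of_real (\<Sum>q\<in>{0..<n}. M (e p) (e q) / s * w (e q))" by simp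
    also have "(\<Sum>q\<in>{0..<n}. M (e p) (e q) / s * w (e q)) = Mapp S M s w (e p)"
      unfolding Mapp_def sum_reindex_e[OF e] ..
    finally show "(?A *\<^sub>v vec n (\<lambda>p. complex_of_real (w (e p)))) $ p = vec n (\<lambda>p. complex_of_real (Mapp S M s w (e p))) $ p"
      using p by simp
  qed simp
  then have "(?A ^\<^sub>m Suc k) *\<^sub>v vec n (\<lambda>p. complex_of_real (w (e p)))
      = (?A ^\<^sub>m k) *\<^sub>v vec n (\<lambda>p. complex_of_real (Mapp S M s w (e p)))"
    by (simp del: pow_mat.simps add: pow_mat.simps(2) assoc_mult_mat_vec[of _ n n _ n])
  also have "\<dots> = vec n (\<lambda>p. complex_of_real (Mit S M s (Suc k) w (e p)))" using Suc by simp
  finally show ?case .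
qed

lemma Mit_lower:
  assumes S: "finite S" and M: "\<And>i j. i \<in> S \<Longrightarrow> j \<in> S \<Longrightarrow> M i j \<ge> 0" and s: "s > 0"
    and u: "\<And>i. i \<in> S \<Longrightarrow> u i \<ge> 0"
    and ru: "\<And>i. i \<in> S \<Longrightarrow> r * u i \<le> (\<Sum>j\<in>S. M i j * u j)" and r: "r \<ge> 0"
  shows "\<forall>x\<in>S. (r/s)^k * u x \<le> Mit S M s k u x"
proof (induction k)
  case 0 then show ?case by simp
next
  case (Suc k)
  show ?case
  proof
    fix x assume x: "x \<in> S"
    have "(r/s)^Suc k * u x = (r/s)^k * ((r * u x) / s)" by (simp add: field_simps)
    also have "\<dots> \<le> (r/s)^k * ((\<Sum>j\<in>S. M x j * u j) / s)"
      using ru[OF x] s r by (intro mult_left_mono divide_right_mono) auto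
    also have "\<dots> = (\<Sum>j\<in>S. M x j / s * ((r/s)^k * u j))"
      by (simp add: sum_distrib_left sum_divide_distrib field_simps)
    also have "\<dots> \<le> (\<Sum>j\<in>S. M x j / s * Mit S M s k u j)"
      using Suc x M s by (intro sum_mono mult_left_mono) auto
    also have "\<dots> = Mit S M s (Suc k) u x" unfolding Mit_comm Mapp_def ..
    finally show "(r/s)^Suc k * u x \<le> Mit S M s (Suc k) u x" .
  qed
qed

lemma CW:
  fixes M :: "'i \<Rightarrow> 'i \<Rightarrow> real"
  assumes S: "finite S" and M: "\<And>i j. i \<in> S \<Longrightarrow> j \<in> S \<Longrightarrow> M i j \<ge> 0"
    and u: "\<And>i. i \<in> S \<Longrightarrow> u i \<ge> 0" and x0: "x0 \<in> S" "u x0 > 0"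
    and ru: "\<And>i. i \<in> S \<Longrightarrow> r * u i \<le> (\<Sum>j\<in>S. M i j * u j)" and r: "r > 0"
  shows "\<exists>c. is_eig S M c \<and> r \<le> cmod c"
proof (rule ccontr)
  assume "\<not> ?thesis"
  then have lt: "\<And>c. is_eig S M c \<Longrightarrow> cmod c < r" by force
  define n where "n = card S"
  obtain e where e: "bij_betw e {0..<n} S" using ex_bij_betw_nat_finite[OF S] unfolding n_def by blast
  have n: "n > 0" using x0 S unfolding n_def by (auto simp: card_gt_0_iff)
  define A where "A s = mat n n (\<lambda>(p,q). complex_of_real (M (e p) (e q) / s))" for s
  have Ac: "A s \<in> carrier_mat n n" for s unfolding A_def by simp
  define \<rho>0 where "\<rho>0 = spectral_radius (A 1)"
  obtain l0 where l0: "l0 \<in> spectrum (A 1)" "\<rho>0 = cmod l0"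
    using spectral_radius_mem_max(1)[OF Ac n] unfolding \<rho>0_def by auto
  have "is_eig S M (of_real 1 * l0)"
    using CW_bridge1[OF e, of 1 M l0] l0(1) unfolding A_def spectrum_def by simp
  then have r0: "\<rho>0 < r" using lt l0(2) by simp
  have r00: "\<rho>0 \<ge> 0" using l0(2) by simp
  define s where "s = (\<rho>0 + r) / 2"
  have s: "s > 0" "s < r" "\<rho>0 < s" using r0 r00 unfolding s_def by auto
  have "spectral_radius (A s) < 1"
  proof -
    obtain \<kappa> where k: "\<kappa> \<in> spectrum (A s)" "spectral_radius (A s) = cmod \<kappa>"
      using spectral_radius_mem_max(1)[OF Ac n] by auto
    have "is_eig S M (of_real s * \<kappa>)"
      using CW_bridge1[OF e s(1), of M \<kappa>] k(1) unfolding A_def spectrum_def by simp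
    from CW_bridge2[OF e this] have "of_real s * \<kappa> \<in> spectrum (A 1)"
      unfolding A_def spectrum_def by simp
    from spectral_radius_mem_max(2)[OF Ac[of 1] n] this
    have "cmod (of_real s * \<kappa>) \<le> \<rho>0" unfolding \<rho>0_def by auto
    then have "s * cmod \<kappa> < s * 1" using s by (simp only: norm_mult norm_of_real abs_of_pos)
    then show ?thesis using k(2) s by (simp only: mult_less_cancel_left_pos)
  qed
  from spectral_radius_jnf_norm_bound_less_1_upper_triangular[OF Ac this]
  obtain cb where cb: "\<And>k. norm_bound (A s ^\<^sub>m k) cb" by blast
  define U where "U = (\<Sum>x\<in>S. u x)"
  have uU: "\<And>x. x \<in> S \<Longrightarrow> u x \<le> U" unfolding U_def using S u by (intro member_le_sum) auto
  obtain p0 where p0: "p0 < n" "x0 = e p0" using e x0 by (auto simp: bij_betw_def image_iff)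
  have eS: "\<And>p. p < n \<Longrightarrow> e p \<in> S" using e by (auto simp: bij_betw_def)
  have cb0: "cb \<ge> 0" using cb[of 0] n unfolding norm_bound_def
    by (metis Ac norm_ge_zero order.trans pow_mat_dim_square)
  have bound: "(r/s)^k * u x0 \<le> real n * cb * U" for k
  proof -
    have lo: "(r/s)^k * u x0 \<le> Mit S M s k u x0"
      using Mit_lower[OF S M s(1) u ru less_imp_le[OF r], of k] x0 by auto
    have "0 \<le> (r/s)^k * u x0" using r s x0 by simp
    then have "Mit S M s k u x0 \<ge> 0" using lo by linarith
    then have "(r/s)^k * u x0 \<le> cmod (complex_of_real (Mit S M s k u (e p0)))"
      using lo p0 by simp
    also have "complex_of_real (Mit S M s k u (e p0)) = ((A s ^\<^sub>m k) *\<^sub>v vec n (\<lambda>p. complex_of_real (u (e p)))) $ p0"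
      using Mit_mat[OF e, of M s k u] p0 unfolding A_def by simp
    also have "\<dots> = (\<Sum>q\<in>{0..<n}. (A s ^\<^sub>m k) $$ (p0, q) * complex_of_real (u (e q)))"
      using p0 Ac[of s] by (simp add: scalar_prod_def)
    also have "cmod \<dots> \<le> (\<Sum>q\<in>{0..<n}. cmod ((A s ^\<^sub>m k) $$ (p0, q)) * \<bar>u (e q)\<bar>)"
      by (rule order.trans[OF norm_sum]) (simp add: norm_mult)
    also have "\<dots> \<le> (\<Sum>q\<in>{0..<n}. cb * U)"
    proof (rule sum_mono)
      fix q assume q: "q \<in> {0..<n}"
      have "cmod ((A s ^\<^sub>m k) $$ (p0, q)) \<le> cb" using cb[of k] p0 q Ac[of s]
        unfolding norm_bound_def by auto
      moreover have "\<bar>u (e q)\<bar> \<le> U" using u uU eS q by auto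
      ultimately show "cmod ((A s ^\<^sub>m k) $$ (p0, q)) * \<bar>u (e q)\<bar> \<le> cb * U"
        using cb0 by (intro mult_mono) auto
    qed
    also have "\<dots> = real n * cb * U" by simp
    finally show ?thesis .
  qed
  have "1 < r / s" using s by simp
  from real_arch_pow[OF this, of "real n * cb * U / u x0"]
  obtain k where "real n * cb * U / u x0 < (r/s)^k" by blast
  then have "real n * cb * U < (r/s)^k * u x0" using x0 by (simp add: field_simps)
  with bound[of k] show False by simp
qed

lemma finite_cube: assumes "finite N" shows "finite (cube N)"
proof -
  have "cube N \<subseteq> (\<lambda>f i. if i \<in> N then f i else 0) ` (PiE N (\<lambda>_. {-1, 1}))"
  proof
    fix \<sigma> assume s: "\<sigma> \<in> cube N"
    have "\<sigma> = (\<lambda>i. if i \<in> N then restrict \<sigma> N i else 0)" using s by (auto simp: cube_def)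
    moreover have "restrict \<sigma> N \<in> PiE N (\<lambda>_. {-1, 1})" using s by (auto simp: cube_def)
    ultimately show "\<sigma> \<in> (\<lambda>f i. if i \<in> N then f i else 0) ` (PiE N (\<lambda>_. {-1, 1}))" by blast
  qed
  moreover have "finite (PiE N (\<lambda>_. {-1::int, 1}))" using assms by (intro finite_PiE) auto
  ultimately show ?thesis using finite_subset by blast
qed

lemma cube_val: "\<sigma> \<in> cube N \<Longrightarrow> i \<in> N \<Longrightarrow> \<sigma> i = -1 \<or> \<sigma> i = 1"
  and cube_out: "\<sigma> \<in> cube N \<Longrightarrow> i \<notin> N \<Longrightarrow> \<sigma> i = 0"
  by (auto simp: cube_def)

definition Wt :: "'i set \<Rightarrow> ('i \<Rightarrow> real) \<Rightarrow> (('i \<Rightarrow> int) \<Rightarrow> real) \<Rightarrow> (('i \<Rightarrow> int) \<Rightarrow> bool) \<Rightarrow> real" where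
  "Wt N lam \<nu> E = (\<Sum>\<sigma>\<in>cube N. if E \<sigma> then \<nu> \<sigma> * (\<Prod>i\<in>{i\<in>N. \<sigma> i = 1}. lam i) else 0)"

lemma prob_tilt: "prob N (tilt N lam \<nu>) E = Wt N lam \<nu> E / Wt N lam \<nu> (\<lambda>_. True)"
  unfolding prob_def tilt_def Wt_def sum_divide_distrib by (rule sum.cong) auto

lemma prob_cond: "prob N (cond N \<nu> E) F = prob N \<nu> (\<lambda>\<sigma>. E \<sigma> \<and> F \<sigma>) / prob N \<nu> E"
  unfolding prob_def cond_def by (auto simp: sum_divide_distrib intro!: sum.cong)

lemma Wt_cong: "(\<And>\<sigma>. \<sigma> \<in> cube N \<Longrightarrow> E \<sigma> = E' \<sigma>) \<Longrightarrow> Wt N lam \<nu> E = Wt N lam \<nu> E'"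
  unfolding Wt_def by (rule sum.cong) auto

lemma prob_cong: "(\<And>\<sigma>. \<sigma> \<in> cube N \<Longrightarrow> E \<sigma> = E' \<sigma>) \<Longrightarrow> prob N \<nu> E = prob N \<nu> E'"
  unfolding prob_def by (rule sum.cong) auto

definition Tn :: "'i set \<Rightarrow> (('i \<Rightarrow> int) \<Rightarrow> real) \<Rightarrow> ('i \<Rightarrow> int \<Rightarrow> real) \<Rightarrow> real" where
  "Tn N \<mu> \<phi> = (\<Sum>X\<in>cube N. \<mu> X * (\<Prod>l\<in>N. \<phi> l (X l)))"

definition dl :: "int \<Rightarrow> int \<Rightarrow> real" where "dl y x = (if x = y then 1 else 0)"

lemma prod_ind: "finite N \<Longrightarrow> (\<Prod>l\<in>N. if P l then 1 else 0::real) = (if \<forall>l\<in>N. P l then 1 else 0)"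
  by (cases "\<forall>l\<in>N. P l") (auto intro: prod.neutral)

lemma Wt_Tn:
  assumes N: "finite N"
  shows "Wt N lam \<mu> (\<lambda>\<sigma>. \<forall>l\<in>N. w l \<noteq> 0 \<longrightarrow> \<sigma> l = w l)
       = Tn N \<mu> (\<lambda>l x. (if w l = 0 \<or> w l = x then 1 else 0) * (if x = 1 then lam l else 1))"
  unfolding Wt_def Tn_def
proof (rule sum.cong[OF refl])
  fix \<sigma> assume "\<sigma> \<in> cube N"
  have "(\<Prod>l\<in>N. (if w l = 0 \<or> w l = \<sigma> l then 1 else 0) * (if \<sigma> l = 1 then lam l else 1))
     = (\<Prod>l\<in>N. (if w l = 0 \<or> w l = \<sigma> l then 1 else 0::real)) * (\<Prod>l\<in>N. if \<sigma> l = 1 then lam l else 1)"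
    by (rule prod.distrib)
  also have "(\<Prod>l\<in>N. (if w l = 0 \<or> w l = \<sigma> l then 1 else 0::real)) = (if \<forall>l\<in>N. w l = 0 \<or> w l = \<sigma> l then 1 else 0)"
    by (rule prod_ind[OF N])
  also have "(\<Prod>l\<in>N. if \<sigma> l = 1 then lam l else 1) = (\<Prod>i\<in>{i\<in>N. \<sigma> i = 1}. lam i)"
    using prod.inter_filter[OF N] by metis
  finally have eq: "(\<Prod>l\<in>N. (if w l = 0 \<or> w l = \<sigma> l then 1 else 0) * (if \<sigma> l = 1 then lam l else 1))
     = (if \<forall>l\<in>N. w l = 0 \<or> w l = \<sigma> l then 1 else 0) * (\<Prod>i\<in>{i\<in>N. \<sigma> i = 1}. lam i)" .
  have iff: "(\<forall>l\<in>N. w l \<noteq> 0 \<longrightarrow> \<sigma> l = w l) = (\<forall>l\<in>N. w l = 0 \<or> w l = \<sigma> l)" by auto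
  show "(if \<forall>l\<in>N. w l \<noteq> 0 \<longrightarrow> \<sigma> l = w l then \<mu> \<sigma> * (\<Prod>i\<in>{i\<in>N. \<sigma> i = 1}. lam i) else 0) =
         \<mu> \<sigma> * (\<Prod>l\<in>N. (if w l = 0 \<or> w l = \<sigma> l then 1 else 0) * (if \<sigma> l = 1 then lam l else 1))"
    unfolding eq iff by auto
qed

lemma Tn_split:
  assumes N: "finite N" and i: "i \<in> N"
  shows "Tn N \<mu> \<phi> = \<phi> i 1 * Tn N \<mu> (\<phi>(i := dl 1)) + \<phi> i (-1) * Tn N \<mu> (\<phi>(i := dl (-1)))"
  unfolding Tn_def sum_distrib_left sum.distrib[symmetric]
proof (rule sum.cong[OF refl])
  fix X assume X: "X \<in> cube N"
  let ?R = "\<Prod>l\<in>N-{i}. \<phi> l (X l)"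
  have e1: "(\<Prod>l\<in>N. \<phi> l (X l)) = \<phi> i (X i) * ?R" using prod.remove[OF N i] by blast
  have e2: "(\<Prod>l\<in>N. (\<phi>(i := d)) l (X l)) = d (X i) * ?R" for d
  proof -
    have "(\<Prod>l\<in>N-{i}. (\<phi>(i := d)) l (X l)) = ?R" by (rule prod.cong) auto
    then show ?thesis using prod.remove[OF N i, of "\<lambda>l. (\<phi>(i := d)) l (X l)"] by simp
  qed
  show "\<mu> X * (\<Prod>l\<in>N. \<phi> l (X l)) =
        \<phi> i 1 * (\<mu> X * (\<Prod>l\<in>N. (\<phi>(i := dl 1)) l (X l))) + \<phi> i (-1) * (\<mu> X * (\<Prod>l\<in>N. (\<phi>(i := dl (-1))) l (X l)))"
    unfolding e1 e2 using cube_val[OF X i] by (auto simp: dl_def)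
qed

lemma Tn_scale:
  assumes "\<And>l x. l \<in> N \<Longrightarrow> x \<in> {-1, 1} \<Longrightarrow> \<phi> l x = c l * \<phi>' l x"
  shows "Tn N \<mu> \<phi> = (\<Prod>l\<in>N. c l) * Tn N \<mu> \<phi>'"
  unfolding Tn_def sum_distrib_left
proof (rule sum.cong[OF refl])
  fix X assume X: "X \<in> cube N"
  have "(\<Prod>l\<in>N. \<phi> l (X l)) = (\<Prod>l\<in>N. c l * \<phi>' l (X l))"
    using assms cube_val[OF X] by (intro prod.cong) auto
  then show "\<mu> X * (\<Prod>l\<in>N. \<phi> l (X l)) = prod c N * (\<mu> X * (\<Prod>l\<in>N. \<phi>' l (X l)))"
    by (simp add: prod.distrib)
qed

lemma Tn_cong:
  assumes "\<And>l x. l \<in> N \<Longrightarrow> x \<in> {-1, 1} \<Longrightarrow> \<phi> l x = \<phi>' l x"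
  shows "Tn N \<mu> \<phi> = Tn N \<mu> \<phi>'"
  using Tn_scale[of N \<phi> "\<lambda>_. 1" \<phi>' \<mu>] assms by simp

lemma Tn_mono:
  assumes mu: "\<And>X. \<mu> X \<ge> 0"
    and "\<And>l x. l \<in> N \<Longrightarrow> x \<in> {-1, 1} \<Longrightarrow> 0 \<le> \<phi> l x \<and> \<phi> l x \<le> \<phi>' l x"
  shows "Tn N \<mu> \<phi> \<le> Tn N \<mu> \<phi>'"
  unfolding Tn_def
proof (rule sum_mono)
  fix X assume X: "X \<in> cube N"
  have "(\<Prod>l\<in>N. \<phi> l (X l)) \<le> (\<Prod>l\<in>N. \<phi>' l (X l))"
    using assms(2) cube_val[OF X] by (intro prod_mono) auto
  then show "\<mu> X * (\<Prod>l\<in>N. \<phi> l (X l)) \<le> \<mu> X * (\<Prod>l\<in>N. \<phi>' l (X l))"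
    using mu by (intro mult_left_mono) auto
qed

lemma Tn_nonneg:
  assumes mu: "\<And>X. \<mu> X \<ge> 0"
    and "\<And>l x. l \<in> N \<Longrightarrow> x \<in> {-1, 1} \<Longrightarrow> 0 \<le> \<phi> l x"
  shows "0 \<le> Tn N \<mu> \<phi>"
  unfolding Tn_def using assms by (intro sum_nonneg mult_nonneg_nonneg prod_nonneg) (auto dest: cube_val)

lemma Tn_zero:
  assumes N: "finite N" and i: "i \<in> N" and "\<phi> i 1 = 0" "\<phi> i (-1) = 0"
  shows "Tn N \<mu> \<phi> = 0"
  using Tn_split[OF N i, of \<mu> \<phi>] assms by simp

definition flip :: "'i \<Rightarrow> ('i \<Rightarrow> int) \<Rightarrow> ('i \<Rightarrow> int)" where
  "flip i X = X(i := - X i)"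

lemma flip_bij: assumes i: "i \<in> N" shows "bij_betw (flip i) (cube N) (cube N)"
proof -
  have inv: "flip i (flip i X) = X" for X by (auto simp: flip_def)
  have mem: "X \<in> cube N \<Longrightarrow> flip i X \<in> cube N" for X using i by (auto simp: cube_def flip_def)
  show ?thesis
    by (rule bij_betwI[where g="flip i"]) (auto simp: inv mem)
qed

lemma Tn_flip:
  assumes N: "finite N" and i: "i \<in> N" and mu: "\<And>X. \<mu> X \<ge> 0"
    and phi: "\<And>l x. l \<in> N \<Longrightarrow> x \<in> {-1, 1} \<Longrightarrow> 0 \<le> \<phi> l x"
    and fl: "\<And>X. X \<in> cube N \<Longrightarrow> X i = 1 \<Longrightarrow> m * \<mu> X \<le> \<mu> (X(i := -1))"
  shows "m * Tn N \<mu> (\<phi>(i := dl 1)) \<le> Tn N \<mu> (\<phi>(i := dl (-1)))"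
proof -
  define R where "R X = (\<Prod>l\<in>N-{i}. \<phi> l (X l))" for X
  have e2: "(\<Prod>l\<in>N. (\<phi>(i := d)) l (X l)) = d (X i) * R X" for d X
  proof -
    have "(\<Prod>l\<in>N-{i}. (\<phi>(i := d)) l (X l)) = R X" unfolding R_def by (rule prod.cong) auto
    then show ?thesis using prod.remove[OF N i, of "\<lambda>l. (\<phi>(i := d)) l (X l)"] by simp
  qed
  have Rf: "R (flip i X) = R X" for X unfolding R_def flip_def by (rule prod.cong) auto
  have R0: "X \<in> cube N \<Longrightarrow> R X \<ge> 0" for X unfolding R_def using phi cube_val[of X N] by (intro prod_nonneg) auto
  have "Tn N \<mu> (\<phi>(i := dl (-1))) = (\<Sum>X\<in>cube N. \<mu> X * (dl (-1) (X i) * R X))"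
    unfolding Tn_def e2 ..
  also have "\<dots> = (\<Sum>X\<in>cube N. \<mu> (flip i X) * (dl (-1) (flip i X i) * R (flip i X)))"
    using sum.reindex_bij_betw[OF flip_bij[OF i], of "\<lambda>X. \<mu> X * (dl (-1) (X i) * R X)"] by simp
  also have "\<dots> = (\<Sum>X\<in>cube N. \<mu> (flip i X) * (dl 1 (X i) * R X))"
    unfolding Rf by (rule sum.cong) (auto simp: flip_def dl_def)
  finally have eq: "Tn N \<mu> (\<phi>(i := dl (-1))) = (\<Sum>X\<in>cube N. \<mu> (flip i X) * (dl 1 (X i) * R X))" .
  have "m * Tn N \<mu> (\<phi>(i := dl 1)) = (\<Sum>X\<in>cube N. (m * \<mu> X) * (dl 1 (X i) * R X))"
    unfolding Tn_def e2 sum_distrib_left by (simp add: mult.assoc)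
  also have "\<dots> \<le> (\<Sum>X\<in>cube N. \<mu> (flip i X) * (dl 1 (X i) * R X))"
  proof (rule sum_mono)
    fix X assume X: "X \<in> cube N"
    show "m * \<mu> X * (dl 1 (X i) * R X) \<le> \<mu> (flip i X) * (dl 1 (X i) * R X)"
    proof (cases "X i = 1")
      case True
      then have "flip i X = X(i := -1)" by (simp add: flip_def)
      then show ?thesis using fl[OF X True] R0[OF X] True by (intro mult_right_mono) (auto simp: dl_def)
    qed (auto simp: dl_def)
  qed
  finally show ?thesis unfolding eq .
qed

definition emb :: "'i set \<Rightarrow> nat \<Rightarrow> ('i \<Rightarrow> int) \<Rightarrow> ('i \<Rightarrow> nat) \<Rightarrow> ('i \<times> nat \<Rightarrow> int)" where
  "emb N k X c = (\<lambda>(i,j). if i \<in> N \<and> j \<in> {1..k} then (if X i = 1 \<and> c i = j then 1 else -1) else 0)"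

definition gz :: "nat \<Rightarrow> ('i \<times> nat \<Rightarrow> int) \<Rightarrow> 'i \<Rightarrow> nat \<Rightarrow> bool" where
  "gz k z i j \<longleftrightarrow> (\<forall>j'\<in>{1..k}. z (i,j') \<noteq> 0 \<longrightarrow> z (i,j') = (if j' = j then 1 else -1))"

definition hz :: "nat \<Rightarrow> ('i \<times> nat \<Rightarrow> int) \<Rightarrow> 'i \<Rightarrow> bool" where
  "hz k z i \<longleftrightarrow> (\<forall>j\<in>{1..k}. z (i,j) \<noteq> 0 \<longrightarrow> z (i,j) = -1)"

definition phiZ :: "('i \<times> nat \<Rightarrow> real) \<Rightarrow> nat \<Rightarrow> ('i \<times> nat \<Rightarrow> int) \<Rightarrow> 'i \<Rightarrow> int \<Rightarrow> real" where
  "phiZ lam k z i x = (if x = 1 then (\<Sum>j\<in>{1..k}. lam (i,j) / real k * (if gz k z i j then 1 else 0))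
                        else (if hz k z i then 1 else 0))"

definition Vset :: "'i set \<Rightarrow> nat \<Rightarrow> ('i \<times> nat \<Rightarrow> int) set" where
  "Vset N k = {Y \<in> cube (N \<times> {1..k}). \<forall>i\<in>N. card {j\<in>{1..k}. Y (i, j) = 1} \<le> 1}"

definition Pset :: "'i set \<Rightarrow> ('i \<Rightarrow> int) \<Rightarrow> 'i set" where
  "Pset N X = {i\<in>N. X i = 1}"

lemma emb_cube: "emb N k X c \<in> cube (N \<times> {1..k})"
  unfolding emb_def cube_def by auto

lemma emb_V:
  assumes c: "c \<in> PiE (Pset N X) (\<lambda>_. {1..k})"
  shows "emb N k X c \<in> Vset N k"
  unfolding Vset_def
proof (intro CollectI conjI ballI emb_cube)
  fix i assume i: "i \<in> N"
  have "{j\<in>{1..k}. emb N k X c (i, j) = 1} \<subseteq> {c i}" unfolding emb_def by auto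
  then have "card {j\<in>{1..k}. emb N k X c (i, j) = 1} \<le> card {c i}"
    by (intro card_mono) auto
  then show "card {j\<in>{1..k}. emb N k X c (i, j) = 1} \<le> 1" by simp
qed

lemma emb_X:
  assumes X: "X \<in> cube N" and c: "c \<in> PiE (Pset N X) (\<lambda>_. {1..k})"
  shows "(\<lambda>i. if i \<in> N then (if \<exists>j\<in>{1..k}. emb N k X c (i, j) = 1 then 1 else -1) else 0) = X"
proof
  fix i show "(if i \<in> N then (if \<exists>j\<in>{1..k}. emb N k X c (i, j) = 1 then 1 else -1) else 0) = X i"
  proof (cases "i \<in> N")
    case True
    show ?thesis
    proof (cases "X i = 1")
      case True2: True
      then have "c i \<in> {1..k}" using c \<open>i \<in> N\<close> by (auto simp: Pset_def)
      then show ?thesis using True True2 by (auto simp: emb_def intro!: bexI[of _ "c i"])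
    next
      case False
      then have "X i = -1" using cube_val[OF X True] by auto
      then show ?thesis using True False by (auto simp: emb_def)
    qed
  qed (use cube_out[OF X] in auto)
qed

lemma emb_ones:
  assumes X: "X \<in> cube N" and c: "c \<in> PiE (Pset N X) (\<lambda>_. {1..k})"
  shows "{a \<in> N \<times> {1..k}. emb N k X c a = 1} = (\<lambda>i. (i, c i)) ` Pset N X"
proof
  show "{a \<in> N \<times> {1..k}. emb N k X c a = 1} \<subseteq> (\<lambda>i. (i, c i)) ` Pset N X"
  proof
    fix a assume a: "a \<in> {a \<in> N \<times> {1..k}. emb N k X c a = 1}"
    obtain i j where ij: "a = (i,j)" by (cases a)
    have "X i = 1" "c i = j" "i \<in> N" using a ij by (auto simp: emb_def split: if_splits)
    then show "a \<in> (\<lambda>i. (i, c i)) ` Pset N X" using ij by (auto simp: Pset_def)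
  qed
  show "(\<lambda>i. (i, c i)) ` Pset N X \<subseteq> {a \<in> N \<times> {1..k}. emb N k X c a = 1}"
    using c by (auto simp: emb_def Pset_def PiE_def Pi_def)
qed

lemma emb_E:
  assumes X: "X \<in> cube N" and c: "c \<in> PiE (Pset N X) (\<lambda>_. {1..k})"
  shows "(\<forall>a\<in>N \<times> {1..k}. z a \<noteq> 0 \<longrightarrow> emb N k X c a = z a)
     \<longleftrightarrow> (\<forall>i\<in>Pset N X. gz k z i (c i)) \<and> (\<forall>i\<in>N - Pset N X. hz k z i)"
proof -
  have "(\<forall>a\<in>N \<times> {1..k}. z a \<noteq> 0 \<longrightarrow> emb N k X c a = z a)
     \<longleftrightarrow> (\<forall>i\<in>N. \<forall>j\<in>{1..k}. z (i,j) \<noteq> 0 \<longrightarrow> emb N k X c (i,j) = z (i,j))" by auto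
  also have "\<dots> \<longleftrightarrow> (\<forall>i\<in>N. if X i = 1 then gz k z i (c i) else hz k z i)"
  proof (intro ball_cong refl)
    fix i assume i: "i \<in> N"
    show "(\<forall>j\<in>{1..k}. z (i,j) \<noteq> 0 \<longrightarrow> emb N k X c (i,j) = z (i,j)) = (if X i = 1 then gz k z i (c i) else hz k z i)"
    proof (cases "X i = 1")
      case True
      have "emb N k X c (i,j) = (if j = c i then 1 else -1)" if "j \<in> {1..k}" for j
        using True i that by (auto simp: emb_def)
      then show ?thesis using True unfolding gz_def by (metis (no_types, lifting))
    next
      case False
      have "emb N k X c (i,j) = -1" if "j \<in> {1..k}" for j
        using False i that by (auto simp: emb_def)
      then show ?thesis using False unfolding hz_def by (metis (no_types, lifting))
    qed
  qed
  also have "\<dots> \<longleftrightarrow> (\<forall>i\<in>Pset N X. gz k z i (c i)) \<and> (\<forall>i\<in>N - Pset N X. hz k z i)"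
    unfolding Pset_def by auto
  finally show ?thesis .
qed

abbreviation Sig :: "'i set \<Rightarrow> nat \<Rightarrow> (('i \<Rightarrow> int) \<times> ('i \<Rightarrow> nat)) set" where
  "Sig N k \<equiv> Sigma (cube N) (\<lambda>X. PiE (Pset N X) (\<lambda>_. {1..k}))"

lemma emb_inj: "inj_on (\<lambda>(X,c). emb N k X c) (Sig N k)"
proof (rule inj_onI, clarify)
  fix X c X' c'
  assume X: "X \<in> cube N" and c: "c \<in> PiE (Pset N X) (\<lambda>_. {1..k})"
    and X': "X' \<in> cube N" and c': "c' \<in> PiE (Pset N X') (\<lambda>_. {1..k})"
    and eq: "emb N k X c = emb N k X' c'"
  have XX: "X = X'" using emb_X[OF X c] emb_X[OF X' c'] eq by metis
  have "c i = c' i" if i: "i \<in> Pset N X" for i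
  proof -
    have ci: "c i \<in> {1..k}" "i \<in> N" "X i = 1" using c i by (auto simp: Pset_def)
    then have "emb N k X c (i, c i) = 1" by (simp add: emb_def)
    then have "emb N k X' c' (i, c i) = 1" using eq by simp
    then show ?thesis using ci by (auto simp: emb_def split: if_splits)
  qed
  then show "X = X' \<and> c = c'" using XX PiE_ext[OF c] c' by auto
qed

lemma emb_surj:
  assumes Y: "Y \<in> Vset N k"
  shows "Y \<in> (\<lambda>(X,c). emb N k X c) ` Sig N k"
proof -
  have Yc: "Y \<in> cube (N \<times> {1..k})" and crd: "\<And>i. i \<in> N \<Longrightarrow> card {j\<in>{1..k}. Y (i, j) = 1} \<le> 1"
    using Y by (auto simp: Vset_def)
  have uniq: "\<And>i j j'. i \<in> N \<Longrightarrow> j \<in> {1..k} \<Longrightarrow> j' \<in> {1..k} \<Longrightarrow> Y (i,j) = 1 \<Longrightarrow> Y (i,j') = 1 \<Longrightarrow> j = j'"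
  proof -
    fix i j j' assume "i \<in> N" "j \<in> {1..k}" "j' \<in> {1..k}" "Y (i,j) = 1" "Y (i,j') = 1"
    then show "j = j'" using crd[of i] card_le_Suc0_iff_eq[of "{j\<in>{1..k}. Y (i, j) = 1}"] by auto
  qed
  define X where "X i = (if i \<in> N then (if \<exists>j\<in>{1..k}. Y (i, j) = 1 then 1 else -1) else (0::int))" for i
  define c where "c i = (if i \<in> Pset N X then (SOME j. j \<in> {1..k} \<and> Y (i, j) = 1) else undefined)" for i
  have X: "X \<in> cube N" unfolding X_def cube_def by auto
  have cP: "i \<in> Pset N X \<Longrightarrow> c i \<in> {1..k} \<and> Y (i, c i) = 1" for i
  proof -
    assume i: "i \<in> Pset N X"
    have ex: "\<exists>j. j \<in> {1..k} \<and> Y (i,j) = 1" using i by (auto simp: Pset_def X_def split: if_splits)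
    have "c i = (SOME j. j \<in> {1..k} \<and> Y (i,j) = 1)" using i by (simp add: c_def)
    then show ?thesis using someI_ex[OF ex] by simp
  qed
  have c: "c \<in> PiE (Pset N X) (\<lambda>_. {1..k})" using cP by (auto simp: c_def PiE_def Pi_def extensional_def)
  have "Y = emb N k X c"
  proof
    fix a :: "'a \<times> nat"
    obtain i j where a: "a = (i,j)" by (cases a)
    show "Y a = emb N k X c a"
    proof (cases "i \<in> N \<and> j \<in> {1..k}")
      case False
      then show ?thesis using cube_out[OF Yc, of a] a by (auto simp: emb_def)
    next
      case True
      then have Yv: "Y (i,j) = -1 \<or> Y (i,j) = 1" using cube_val[OF Yc, of a] a by auto
      show ?thesis
      proof (cases "Y (i,j) = 1")
        case True2: True
        then have P: "i \<in> Pset N X" using True by (auto simp: Pset_def X_def)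
        then have "c i = j" using cP[OF P] uniq[of i "c i" j] True True2 by auto
        then show ?thesis using True2 True P a by (auto simp: emb_def Pset_def)
      next
        case False
        have "\<not> (X i = 1 \<and> c i = j)"
        proof
          assume "X i = 1 \<and> c i = j"
          then have "Y (i, j) = 1" using cP[of i] True by (auto simp: Pset_def)
          then show False using False by simp
        qed
        then show ?thesis using False Yv True a by (auto simp: emb_def)
      qed
    qed
  qed
  then show ?thesis using X c by force
qed

lemma emb_image: "(\<lambda>(X,c). emb N k X c) ` Sig N k = Vset N k"
  using emb_surj[of _ N k] emb_V by force

lemma fiber:
  assumes N: "finite N" and mu0: "\<And>X. X \<notin> cube N \<Longrightarrow> \<mu> X = 0"
  shows "Wt (N \<times> {1..k}) lam (Rd N \<mu> k) (\<lambda>Y. \<forall>a\<in>N \<times> {1..k}. z a \<noteq> 0 \<longrightarrow> Y a = z a)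
       = Tn N \<mu> (phiZ lam k z)"
proof -
  let ?I = "N \<times> {1..k}"
  let ?E = "\<lambda>Y. \<forall>a\<in>?I. z a \<noteq> 0 \<longrightarrow> Y a = z a"
  define F where "F Y = (if ?E Y then Rd N \<mu> k Y * (\<Prod>i\<in>{i\<in>?I. Y i = 1}. lam i) else 0)" for Y
  have fI: "finite ?I" using N by simp
  have fS: "finite (Sig N k)" using finite_cube[OF N] by (intro finite_SigmaI finite_PiE) (auto simp: Pset_def N)
  have "Wt ?I lam (Rd N \<mu> k) ?E = (\<Sum>Y\<in>cube ?I. F Y)" unfolding Wt_def F_def ..
  also have "\<dots> = (\<Sum>Y\<in>Vset N k. F Y)"
    by (rule sum.mono_neutral_right) (use finite_cube[OF fI] in \<open>auto simp: F_def Rd_def Vset_def\<close>)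
  also have "\<dots> = (\<Sum>(X,c)\<in>Sig N k. F (emb N k X c))"
    unfolding emb_image[symmetric, of N k] by (subst sum.reindex[OF emb_inj]) (simp add: case_prod_unfold)
  also have "\<dots> = (\<Sum>X\<in>cube N. \<Sum>c\<in>PiE (Pset N X) (\<lambda>_. {1..k}). F (emb N k X c))"
    by (rule sum.Sigma[symmetric]) (use finite_cube[OF N] N in \<open>auto intro!: finite_PiE simp: Pset_def\<close>)
  also have "\<dots> = (\<Sum>X\<in>cube N. \<mu> X * (\<Prod>l\<in>N. phiZ lam k z l (X l)))"
  proof (rule sum.cong[OF refl])
    fix X assume X: "X \<in> cube N"
    let ?P = "Pset N X"
    have fP: "finite ?P" using N by (simp add: Pset_def)
    define f where "f i j = lam (i,j) / real k * (if gz k z i j then 1 else 0)" for i j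
    have Fe: "F (emb N k X c) = \<mu> X * (\<Prod>i\<in>N - ?P. if hz k z i then 1 else 0) * (\<Prod>i\<in>?P. f i (c i))"
      if c: "c \<in> PiE ?P (\<lambda>_. {1..k})" for c
    proof -
      have Rd: "Rd N \<mu> k (emb N k X c) = \<mu> X * (1 / real k) ^ card ?P"
        using emb_V[OF c] emb_X[OF X c] unfolding Rd_def Vset_def Pset_def by (simp add: Let_def)
      have pr: "(\<Prod>a\<in>{a\<in>?I. emb N k X c a = 1}. lam a) = (\<Prod>i\<in>?P. lam (i, c i))"
        unfolding emb_ones[OF X c] by (subst prod.reindex) (auto intro: inj_onI simp: o_def)
      have ind: "(if (\<forall>i\<in>?P. gz k z i (c i)) \<and> (\<forall>i\<in>N - ?P. hz k z i) then 1 else 0::real)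
           = (\<Prod>i\<in>?P. if gz k z i (c i) then 1 else 0) * (\<Prod>i\<in>N - ?P. if hz k z i then 1 else 0)"
        using prod_ind[OF fP, of "\<lambda>i. gz k z i (c i)"] prod_ind[of "N - ?P" "hz k z"] N by auto
      have "F (emb N k X c) = (if (\<forall>i\<in>?P. gz k z i (c i)) \<and> (\<forall>i\<in>N - ?P. hz k z i) then 1 else 0)
            * (\<mu> X * (1 / real k) ^ card ?P * (\<Prod>i\<in>?P. lam (i, c i)))"
        unfolding F_def emb_E[OF X c] Rd pr by simp
      also have "\<dots> = \<mu> X * (\<Prod>i\<in>N - ?P. if hz k z i then 1 else 0) *
          ((\<Prod>i\<in>?P. if gz k z i (c i) then 1 else 0) * (\<Prod>i\<in>?P. 1 / real k) * (\<Prod>i\<in>?P. lam (i, c i)))"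
        unfolding ind by simp
      also have "(\<Prod>i\<in>?P. if gz k z i (c i) then 1 else 0) * (\<Prod>i\<in>?P. 1 / real k) * (\<Prod>i\<in>?P. lam (i, c i))
           = (\<Prod>i\<in>?P. f i (c i))"
        unfolding f_def prod.distrib[symmetric] by (rule prod.cong) auto
      finally show ?thesis .
    qed
    have "(\<Sum>c\<in>PiE ?P (\<lambda>_. {1..k}). F (emb N k X c))
        = \<mu> X * (\<Prod>i\<in>N - ?P. if hz k z i then 1 else 0) * (\<Sum>c\<in>PiE ?P (\<lambda>_. {1..k}). \<Prod>i\<in>?P. f i (c i))"
      by (simp add: Fe sum_distrib_left)
    also have "(\<Sum>c\<in>PiE ?P (\<lambda>_. {1..k}). \<Prod>i\<in>?P. f i (c i)) = (\<Prod>i\<in>?P. \<Sum>j\<in>{1..k}. f i j)"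
      by (rule prod_sum_PiE[symmetric]) (auto simp: fP)
    also have "(\<Prod>i\<in>?P. \<Sum>j\<in>{1..k}. f i j) = (\<Prod>l\<in>?P. phiZ lam k z l (X l))"
      by (rule prod.cong) (auto simp: Pset_def phiZ_def f_def)
    also have "(\<Prod>i\<in>N - ?P. if hz k z i then 1 else 0) = (\<Prod>l\<in>N - ?P. phiZ lam k z l (X l))"
    proof (rule prod.cong[OF refl])
      fix l assume l: "l \<in> N - ?P"
      then have "X l = -1" using cube_val[OF X, of l] by (auto simp: Pset_def)
      then show "(if hz k z l then 1 else 0) = phiZ lam k z l (X l)" by (simp add: phiZ_def)
    qed
    also have "\<mu> X * (\<Prod>l\<in>N - ?P. phiZ lam k z l (X l)) * (\<Prod>l\<in>?P. phiZ lam k z l (X l))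
        = \<mu> X * (\<Prod>l\<in>N. phiZ lam k z l (X l))"
      using prod.subset_diff[of ?P N "\<lambda>l. phiZ lam k z l (X l)"] N by (simp add: Pset_def mult.assoc)
    finally show "(\<Sum>c\<in>PiE ?P (\<lambda>_. {1..k}). F (emb N k X c)) = \<mu> X * (\<Prod>l\<in>N. phiZ lam k z l (X l))" .
  qed
  also have "\<dots> = Tn N \<mu> (phiZ lam k z)" unfolding Tn_def ..
  finally show ?thesis .
qed

lemma prob_filter: "finite N \<Longrightarrow> prob N \<nu> E = (\<Sum>Z\<in>{Z\<in>cube N. E Z}. \<nu> Z)"
  unfolding prob_def by (simp add: sum.inter_filter finite_cube)

lemma mu_flip:
  assumes dist: "is_dist N \<mu>" and i: "i \<in> N" and X: "X \<in> cube N" and Xi: "X i = 1"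
  shows "mu_min_neg N \<mu> * \<mu> X \<le> \<mu> (X(i := -1))"
proof -
  have N: "finite N" and mu0: "\<And>Z. \<mu> Z \<ge> 0" using dist by (auto simp: is_dist_def)
  define Xm where "Xm = X(i := -1)"
  define \<sigma> where "\<sigma> = restr X (N - {i})"
  have XXm: "X \<noteq> Xm" using Xi by (auto simp: Xm_def fun_eq_iff intro!: exI[of _ i])
  have Xmc: "Xm \<in> cube N" using X i by (auto simp: cube_def Xm_def)
  have set1: "{Z\<in>cube N. restr Z (N - {i}) = \<sigma>} = {X, Xm}"
  proof (rule equalityI; rule subsetI)
    fix Z assume Z: "Z \<in> {Z\<in>cube N. restr Z (N - {i}) = \<sigma>}"
    then have Zc: "Z \<in> cube N" and Zr: "restr Z (N - {i}) = restr X (N - {i})" by (auto simp: \<sigma>_def)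
    have agree: "\<And>l. l \<noteq> i \<Longrightarrow> Z l = X l"
    proof -
      fix l assume l: "l \<noteq> i"
      show "Z l = X l"
      proof (cases "l \<in> N")
        case True then show ?thesis using Zr l unfolding restr_def by (metis DiffI singletonD)
      qed (use cube_out[OF Zc] cube_out[OF X] in auto)
    qed
    from cube_val[OF Zc i] show "Z \<in> {X, Xm}"
    proof
      assume "Z i = -1" then have "Z = Xm" using agree by (auto simp: Xm_def fun_eq_iff)
      then show ?thesis by simp
    next
      assume "Z i = 1" then have "Z = X" using agree Xi by (metis ext)
      then show ?thesis by simp
    qed
  next
    fix Z assume "Z \<in> {X, Xm}"
    moreover have "restr Xm (N - {i}) = \<sigma>" unfolding \<sigma>_def restr_def Xm_def by (rule ext) auto
    ultimately show "Z \<in> {Z\<in>cube N. restr Z (N - {i}) = \<sigma>}"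
      using X Xmc by (auto simp: \<sigma>_def)
  qed
  have set2: "{Z\<in>cube N. restr Z (N - {i}) = \<sigma> \<and> Z i = -1} = {Xm}"
  proof -
    have "{Z\<in>cube N. restr Z (N - {i}) = \<sigma> \<and> Z i = -1} = {Z\<in>{Z\<in>cube N. restr Z (N - {i}) = \<sigma>}. Z i = -1}" by auto
    also have "\<dots> = {Xm}" unfolding set1 using Xi by (auto simp: Xm_def)
    finally show ?thesis .
  qed
  have p1: "prob N \<mu> (\<lambda>Z. restr Z (N - {i}) = \<sigma>) = \<mu> X + \<mu> Xm"
    unfolding prob_filter[OF N] set1 using XXm by simp
  have p2: "prob N \<mu> (\<lambda>Z. restr Z (N - {i}) = \<sigma> \<and> Z i = -1) = \<mu> Xm"
    unfolding prob_filter[OF N] set2 by simp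
  show ?thesis
  proof (cases "\<mu> X + \<mu> Xm > 0")
    case False
    then have "\<mu> X = 0" using mu0[of X] mu0[of Xm] by linarith
    then show ?thesis using mu0 by (simp add: Xm_def)
  next
    case True
    have sc: "\<sigma> \<in> cube (N - {i})" using X unfolding \<sigma>_def restr_def cube_def by auto
    have sm: "\<sigma> \<in> supp_marg N \<mu> (N - {i})"
      unfolding supp_marg_def marg_def using sc p1 True by simp
    let ?S = "\<Union>v\<in>N. (\<lambda>\<tau>. prob N (pin N \<mu> (N - {v}) \<tau>) (\<lambda>\<sigma>. \<sigma> v = -1)) ` supp_marg N \<mu> (N - {v})"
    have fin: "finite ?S"
    proof (intro finite_UN_I N finite_imageI)
      fix v assume "v \<in> N"
      show "finite (supp_marg N \<mu> (N - {v}))"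
        using finite_cube[of "N - {v}"] N by (rule_tac finite_subset[of _ "cube (N - {v})"]) (auto simp: supp_marg_def)
    qed
    have mem: "prob N (pin N \<mu> (N - {i}) \<sigma>) (\<lambda>\<sigma>. \<sigma> i = -1) \<in> ?S" using sm i by blast
    have "mu_min_neg N \<mu> \<le> prob N (pin N \<mu> (N - {i}) \<sigma>) (\<lambda>\<sigma>. \<sigma> i = -1)"
      unfolding mu_min_neg_def using Min_le[OF fin mem] .
    also have "\<dots> = \<mu> Xm / (\<mu> X + \<mu> Xm)"
      unfolding pin_def prob_cond p1 p2 ..
    finally have m: "mu_min_neg N \<mu> \<le> \<mu> Xm / (\<mu> X + \<mu> Xm)" .
    show ?thesis
    proof (cases "mu_min_neg N \<mu> \<le> 0")
      case True then show ?thesis using mu0[of X] mu0[of Xm]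
        by (metis Xm_def mult_nonpos_nonneg order.trans)
    next
      case False
      have "mu_min_neg N \<mu> * \<mu> X \<le> mu_min_neg N \<mu> * (\<mu> X + \<mu> Xm)"
        using False mu0[of Xm] by (intro mult_left_mono) auto
      also have "\<dots> \<le> \<mu> Xm" using m True by (simp add: le_divide_eq)
      finally show ?thesis by (simp add: Xm_def)
    qed
  qed
qed

lemma phiZ_nonneg:
  assumes "\<And>j. j \<in> {1..k} \<Longrightarrow> lam (l,j) \<ge> 0"
  shows "phiZ lam k z l x \<ge> 0"
  unfolding phiZ_def using assms by (auto intro!: sum_nonneg)

lemma phiZ_local:
  assumes "\<And>j. j \<in> {1..k} \<Longrightarrow> z (l,j) = z' (l,j)"
  shows "phiZ lam k z l = phiZ lam k z' l"
proof -
  have g: "gz k z l = gz k z' l" unfolding gz_def using assms by (intro ext ball_cong) auto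
  have h: "hz k z l = hz k z' l" unfolding hz_def using assms by (intro ball_cong) auto
  show ?thesis unfolding phiZ_def g h ..
qed

lemma phiZ_local_upd:
  assumes "fst a \<noteq> l"
  shows "phiZ lam k (z(a := x)) l = phiZ lam k z l"
  by (rule phiZ_local) (use assms in auto)

lemma gz_mono: "z a = 0 \<Longrightarrow> gz k (z(a := x)) l j \<Longrightarrow> gz k z l j"
  unfolding gz_def by (metis fun_upd_other)

lemma hz_mono: "z a = 0 \<Longrightarrow> hz k (z(a := x)) l \<Longrightarrow> hz k z l"
  unfolding hz_def by (metis fun_upd_other)

lemma phiZ_mono:
  assumes za: "z a = 0" and lam: "\<And>j. j \<in> {1..k} \<Longrightarrow> lam (l,j) \<ge> 0"
  shows "phiZ lam k (z(a := x)) l y \<le> phiZ lam k z l y"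
proof (cases "y = 1")
  case True
  then show ?thesis unfolding phiZ_def
    using gz_mono[of z a k x l] za lam by (auto intro!: sum_mono mult_left_mono divide_nonneg_nonneg)
next
  case False
  then show ?thesis unfolding phiZ_def using hz_mono[of z a k x l] za by auto
qed

lemma phiZ_m1: "phiZ lam k z l (-1) = (if hz k z l then 1 else 0)"
  unfolding phiZ_def by simp

lemma sum_delta_ind:
  assumes "j \<in> K" "finite K"
  shows "(\<Sum>j''\<in>K. f j'' * (if j'' = j then 1 else 0)) = (f j :: real)"
  using assms by (simp add: if_distrib[of "\<lambda>x. f _ * x"] sum.delta cong: if_cong)

lemma blk_plus:
  assumes h: "hz k z i" and j: "j \<in> {1..k}" and za: "z (i,j) = 0"
  shows "phiZ lam k (z((i,j) := 1)) i 1 = lam (i,j) / real k"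
    and "phiZ lam k (z((i,j) := 1)) i (-1) = 0"
proof -
  have g: "gz k (z((i,j) := 1)) i j'' \<longleftrightarrow> j'' = j" for j''
  proof
    assume "gz k (z((i,j) := 1)) i j''"
    then have "(z((i,j) := 1)) (i,j) = (if j = j'' then 1 else -1)" using j unfolding gz_def by auto
    then show "j'' = j" by (auto split: if_splits)
  next
    assume "j'' = j"
    then show "gz k (z((i,j) := 1)) i j''" using h unfolding gz_def hz_def by auto
  qed
  show "phiZ lam k (z((i,j) := 1)) i 1 = lam (i,j) / real k"
    unfolding phiZ_def g using sum_delta_ind[OF j, of "\<lambda>j''. lam (i,j'') / real k"] by simp
  show "phiZ lam k (z((i,j) := 1)) i (-1) = 0"
    unfolding phiZ_def hz_def using j by auto
qed

lemma blk_minus: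
  assumes h: "hz k z i" and j: "j \<in> {1..k}" and za: "z (i,j) = 0"
  shows "phiZ lam k (z((i,j) := -1)) i 1 = phiZ lam k z i 1 - lam (i,j) / real k"
    and "phiZ lam k (z((i,j) := -1)) i (-1) = 1"
proof -
  have g: "gz k (z((i,j) := -1)) i j'' \<longleftrightarrow> gz k z i j'' \<and> j'' \<noteq> j" for j''
  proof
    assume a: "gz k (z((i,j) := -1)) i j''"
    then have "(z((i,j) := -1)) (i,j) = (if j = j'' then 1 else -1)" using j unfolding gz_def by auto
    then have "j'' \<noteq> j" by (auto split: if_splits)
    moreover have "gz k z i j''" using gz_mono[OF za a] .
    ultimately show "gz k z i j'' \<and> j'' \<noteq> j" by simp
  next
    assume "gz k z i j'' \<and> j'' \<noteq> j"
    then show "gz k (z((i,j) := -1)) i j''" unfolding gz_def by auto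
  qed
  have gj: "gz k z i j" using h za unfolding gz_def hz_def by auto
  have "phiZ lam k z i 1 = (\<Sum>j''\<in>{1..k}. lam (i,j'') / real k * (if gz k z i j'' then 1 else 0))"
    by (simp add: phiZ_def)
  also have "\<dots> = (\<Sum>j''\<in>{1..k}. lam (i,j'') / real k * (if gz k z i j'' \<and> j'' \<noteq> j then 1 else 0)
       + lam (i,j'') / real k * (if j'' = j then 1 else 0))"
    using gj by (intro sum.cong) auto
  also have "\<dots> = (\<Sum>j''\<in>{1..k}. lam (i,j'') / real k * (if gz k z i j'' \<and> j'' \<noteq> j then 1 else 0))
       + (\<Sum>j''\<in>{1..k}. lam (i,j'') / real k * (if j'' = j then 1 else 0))"
    by (rule sum.distrib)
  also have "(\<Sum>j''\<in>{1..k}. lam (i,j'') / real k * (if j'' = j then 1 else 0)) = lam (i,j) / real k"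
    using sum_delta_ind[OF j, of "\<lambda>j''. lam (i,j'') / real k"] by simp
  finally show "phiZ lam k (z((i,j) := -1)) i 1 = phiZ lam k z i 1 - lam (i,j) / real k"
    unfolding phiZ_def g by simp
  show "phiZ lam k (z((i,j) := -1)) i (-1) = 1"
    unfolding phiZ_def using h unfolding hz_def by auto
qed

lemma blk_same_plus_plus:
  assumes j: "j \<in> {1..k}" and j': "j' \<in> {1..k}" and jj: "j \<noteq> j'"
  shows "phiZ lam k (z((i,j) := 1, (i,j') := 1)) i 1 = 0"
    and "phiZ lam k (z((i,j) := x, (i,j') := 1)) i (-1) = 0"
proof -
  have "\<not> gz k (z((i,j) := 1, (i,j') := 1)) i j''" for j''
  proof
    assume a: "gz k (z((i,j) := 1, (i,j') := 1)) i j''"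
    have "(z((i,j) := 1, (i,j') := 1)) (i,j) = (if j = j'' then 1 else -1)"
      using a j unfolding gz_def by (metis fun_upd_apply zero_neq_one)
    moreover have "(z((i,j) := 1, (i,j') := 1)) (i,j') = (if j' = j'' then 1 else -1)"
      using a j' unfolding gz_def by (metis fun_upd_apply zero_neq_one)
    ultimately show False using jj by (auto split: if_splits)
  qed
  then show "phiZ lam k (z((i,j) := 1, (i,j') := 1)) i 1 = 0" unfolding phiZ_def by simp
  show "phiZ lam k (z((i,j) := x, (i,j') := 1)) i (-1) = 0"
    unfolding phiZ_def hz_def using j' by auto
qed

lemma blk_same_minus_plus:
  assumes h: "hz k z i" and j: "j \<in> {1..k}" and j': "j' \<in> {1..k}" and jj: "j \<noteq> j'"
    and za: "z (i,j) = 0" and zb: "z (i,j') = 0"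
  shows "phiZ lam k (z((i,j) := -1, (i,j') := 1)) i 1 = lam (i,j') / real k"
proof -
  have h2: "hz k (z((i,j) := -1)) i" using h unfolding hz_def by auto
  have "(z((i,j) := -1)) (i,j') = 0" using zb jj by auto
  from blk_plus(1)[OF h2 j' this] show ?thesis .
qed

lemma blk_dead:
  assumes j: "j \<in> {1..k}" and za: "z (i,j) = 0"
    and vals: "\<And>j'. j' \<in> {1..k} \<Longrightarrow> z (i,j') \<in> {-1, 0, 1}"
    and lam: "\<And>j. j \<in> {1..k} \<Longrightarrow> lam (i,j) \<ge> 0"
    and nd: "phiZ lam k z i 1 = 0 \<or> phiZ lam k z i (-1) = 0"
  shows "phiZ lam k (z((i,j) := 1)) i 1 = 0" and "phiZ lam k (z((i,j) := 1)) i (-1) = 0"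
proof -
  show m: "phiZ lam k (z((i,j) := 1)) i (-1) = 0" unfolding phiZ_def hz_def using j by auto
  show "phiZ lam k (z((i,j) := 1)) i 1 = 0"
  proof (cases "phiZ lam k z i 1 = 0")
    case True
    have "phiZ lam k (z((i,j) := 1)) i 1 \<le> 0" using phiZ_mono[of z "(i,j)" k lam i 1 1] za lam True by simp
    moreover have "phiZ lam k (z((i,j) := 1)) i 1 \<ge> 0" by (rule phiZ_nonneg) (rule lam)
    ultimately show ?thesis by simp
  next
    case False
    then have "\<not> hz k z i" using nd by (auto simp: phiZ_def)
    then obtain j0 where j0: "j0 \<in> {1..k}" "z (i,j0) \<noteq> 0" "z (i,j0) \<noteq> -1" unfolding hz_def by auto
    then have z1: "z (i,j0) = 1" using vals[OF j0(1)] by auto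
    have j0j: "j0 \<noteq> j" using za j0 by auto
    have "\<not> gz k (z((i,j) := 1)) i j''" for j''
    proof
      assume a: "gz k (z((i,j) := 1)) i j''"
      have "(z((i,j) := 1)) (i,j) = (if j = j'' then 1 else -1)" using a j unfolding gz_def by auto
      moreover have "(z((i,j) := 1)) (i,j0) = (if j0 = j'' then 1 else -1)" using a j0 unfolding gz_def by auto
      ultimately show False using j0j z1 by (auto split: if_splits)
    qed
    then show ?thesis unfolding phiZ_def by simp
  qed
qed

lemma div_div_cancel: "(z::real) \<noteq> 0 \<Longrightarrow> (a / z) / (b / z) = a / b"
  by (cases "b = 0") (simp_all add: field_simps)

lemma prob_pin_tilt:
  assumes Z: "Wt N lam \<nu> (\<lambda>_. True) \<noteq> 0"
  shows "prob N (pin N (tilt N lam \<nu>) \<Lambda> \<tau>) E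
       = Wt N lam \<nu> (\<lambda>\<sigma>. restr \<sigma> \<Lambda> = \<tau> \<and> E \<sigma>) / Wt N lam \<nu> (\<lambda>\<sigma>. restr \<sigma> \<Lambda> = \<tau>)"
  unfolding pin_def prob_cond prob_tilt using div_div_cancel[OF Z] by simp

lemma prob_cond_pin_tilt:
  assumes Z: "Wt N lam \<nu> (\<lambda>_. True) \<noteq> 0" and R: "Wt N lam \<nu> (\<lambda>\<sigma>. restr \<sigma> \<Lambda> = \<tau>) \<noteq> 0"
  shows "prob N (cond N (pin N (tilt N lam \<nu>) \<Lambda> \<tau>) E) F
       = Wt N lam \<nu> (\<lambda>\<sigma>. restr \<sigma> \<Lambda> = \<tau> \<and> E \<sigma> \<and> F \<sigma>) / Wt N lam \<nu> (\<lambda>\<sigma>. restr \<sigma> \<Lambda> = \<tau> \<and> E \<sigma>)"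
  unfolding prob_cond prob_pin_tilt[OF Z] using div_div_cancel[OF R] by (simp add: conj_assoc)

lemma EV_restr:
  assumes t: "\<tau> \<in> cube \<Lambda>" and L: "\<Lambda> \<subseteq> N" and s: "\<sigma> \<in> cube N"
  shows "(restr \<sigma> \<Lambda> = \<tau>) = (\<forall>l\<in>N. \<tau> l \<noteq> 0 \<longrightarrow> \<sigma> l = \<tau> l)"
proof
  assume "restr \<sigma> \<Lambda> = \<tau>"
  then have r: "\<And>l. restr \<sigma> \<Lambda> l = \<tau> l" by simp
  show "\<forall>l\<in>N. \<tau> l \<noteq> 0 \<longrightarrow> \<sigma> l = \<tau> l"
  proof (intro ballI impI)
    fix l assume "\<tau> l \<noteq> 0"
    then have "l \<in> \<Lambda>" using t by (auto simp: cube_def)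
    then show "\<sigma> l = \<tau> l" using r[of l] by (simp add: restr_def)
  qed
next
  assume a: "\<forall>l\<in>N. \<tau> l \<noteq> 0 \<longrightarrow> \<sigma> l = \<tau> l"
  show "restr \<sigma> \<Lambda> = \<tau>"
  proof
    fix l show "restr \<sigma> \<Lambda> l = \<tau> l"
    proof (cases "l \<in> \<Lambda>")
      case True
      then have "\<tau> l \<noteq> 0" using t by (auto simp: cube_def)
      then show ?thesis using a True L by (auto simp: restr_def)
    next
      case False then show ?thesis using t by (auto simp: restr_def cube_def)
    qed
  qed
qed

lemma EV_upd:
  assumes wa: "w a = 0" and a: "a \<in> N" and x: "x \<noteq> 0"
  shows "((\<forall>l\<in>N. w l \<noteq> 0 \<longrightarrow> \<sigma> l = w l) \<and> \<sigma> a = x) = (\<forall>l\<in>N. (w(a := x)) l \<noteq> 0 \<longrightarrow> \<sigma> l = (w(a := x)) l)"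
proof (intro iffI conjI ballI impI)
  fix l assume h: "(\<forall>l\<in>N. w l \<noteq> 0 \<longrightarrow> \<sigma> l = w l) \<and> \<sigma> a = x" and l: "l \<in> N" "(w(a := x)) l \<noteq> 0"
  show "\<sigma> l = (w(a := x)) l"
  proof (cases "l = a")
    case True then show ?thesis using h by simp
  next
    case False then show ?thesis using h l by simp
  qed
next
  fix l assume h: "\<forall>l\<in>N. (w(a := x)) l \<noteq> 0 \<longrightarrow> \<sigma> l = (w(a := x)) l" and l: "l \<in> N" "w l \<noteq> 0"
  then have "l \<noteq> a" using wa by auto
  then show "\<sigma> l = w l" using h l by (metis fun_upd_other)
next
  assume h: "\<forall>l\<in>N. (w(a := x)) l \<noteq> 0 \<longrightarrow> \<sigma> l = (w(a := x)) l"
  then show "\<sigma> a = x" using a x by (metis fun_upd_same)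
qed

lemma EV_restr1:
  assumes t: "\<tau> \<in> cube \<Lambda>" and L: "\<Lambda> \<subseteq> N" and s: "\<sigma> \<in> cube N" and a: "a \<in> N - \<Lambda>" and x: "x \<noteq> 0"
  shows "(restr \<sigma> \<Lambda> = \<tau> \<and> \<sigma> a = x) = (\<forall>l\<in>N. (\<tau>(a := x)) l \<noteq> 0 \<longrightarrow> \<sigma> l = (\<tau>(a := x)) l)"
proof -
  have ta: "\<tau> a = 0" using t a by (auto simp: cube_def)
  show ?thesis unfolding EV_restr[OF t L s] using EV_upd[of \<tau> a N x \<sigma>] ta a x by blast
qed

lemma EV_restr2:
  assumes t: "\<tau> \<in> cube \<Lambda>" and L: "\<Lambda> \<subseteq> N" and s: "\<sigma> \<in> cube N" and a: "a \<in> N - \<Lambda>" and x: "x \<noteq> 0"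
    and b: "b \<in> N - \<Lambda>" and y: "y \<noteq> 0" and ab: "a \<noteq> b"
  shows "(restr \<sigma> \<Lambda> = \<tau> \<and> \<sigma> a = x \<and> \<sigma> b = y) = (\<forall>l\<in>N. (\<tau>(a := x, b := y)) l \<noteq> 0 \<longrightarrow> \<sigma> l = (\<tau>(a := x, b := y)) l)"
proof -
  have tb: "(\<tau>(a := x)) b = 0" using t b ab by (auto simp: cube_def)
  have "(restr \<sigma> \<Lambda> = \<tau> \<and> \<sigma> a = x \<and> \<sigma> b = y) = ((restr \<sigma> \<Lambda> = \<tau> \<and> \<sigma> a = x) \<and> \<sigma> b = y)" by simp
  also have "\<dots> = ((\<forall>l\<in>N. (\<tau>(a := x)) l \<noteq> 0 \<longrightarrow> \<sigma> l = (\<tau>(a := x)) l) \<and> \<sigma> b = y)"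
    unfolding EV_restr1[OF t L s a x] ..
  also have "\<dots> = (\<forall>l\<in>N. (\<tau>(a := x, b := y)) l \<noteq> 0 \<longrightarrow> \<sigma> l = (\<tau>(a := x, b := y)) l)"
    using EV_upd[of "\<tau>(a := x)" b N y \<sigma>] tb b y by blast
  finally show ?thesis .
qed

lemma prob_split_val:
  assumes b: "b \<in> N"
  shows "prob N \<nu> (\<lambda>\<sigma>. E \<sigma> \<and> \<sigma> b = 1) + prob N \<nu> (\<lambda>\<sigma>. E \<sigma> \<and> \<sigma> b = -1) = prob N \<nu> E"
  unfolding prob_def sum.distrib[symmetric]
  by (rule sum.cong) (use cube_val[OF _ b] in auto)

lemma prob_false: "(\<And>\<sigma>. \<sigma> \<in> cube N \<Longrightarrow> \<not> E \<sigma>) \<Longrightarrow> prob N \<nu> E = 0"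
  unfolding prob_def by (rule sum.neutral) auto

lemma tv_cond:
  assumes b: "b \<in> N" and p1: "prob N \<nu> E1 \<noteq> 0" and p2: "prob N \<nu> E2 \<noteq> 0"
  shows "tv_coord N (cond N \<nu> E1) (cond N \<nu> E2) b
     = \<bar>prob N \<nu> (\<lambda>\<sigma>. E1 \<sigma> \<and> \<sigma> b = 1) / prob N \<nu> E1 - prob N \<nu> (\<lambda>\<sigma>. E2 \<sigma> \<and> \<sigma> b = 1) / prob N \<nu> E2\<bar>"
proof -
  let ?q1 = "prob N \<nu> (\<lambda>\<sigma>. E1 \<sigma> \<and> \<sigma> b = 1)" and ?q2 = "prob N \<nu> (\<lambda>\<sigma>. E2 \<sigma> \<and> \<sigma> b = 1)"
  let ?r1 = "prob N \<nu> (\<lambda>\<sigma>. E1 \<sigma> \<and> \<sigma> b = -1)" and ?r2 = "prob N \<nu> (\<lambda>\<sigma>. E2 \<sigma> \<and> \<sigma> b = -1)"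
  have s1: "?q1 + ?r1 = prob N \<nu> E1" and s2: "?q2 + ?r2 = prob N \<nu> E2" using prob_split_val[OF b] by auto
  have "tv_coord N (cond N \<nu> E1) (cond N \<nu> E2) b = (1/2) * (\<bar>?r1 / prob N \<nu> E1 - ?r2 / prob N \<nu> E2\<bar> + \<bar>?q1 / prob N \<nu> E1 - ?q2 / prob N \<nu> E2\<bar>)"
    unfolding tv_coord_def prob_cond by simp
  also have "?r1 / prob N \<nu> E1 = 1 - ?q1 / prob N \<nu> E1" using s1 p1 by (simp add: field_simps)
  also have "?r2 / prob N \<nu> E2 = 1 - ?q2 / prob N \<nu> E2" using s2 p2 by (simp add: field_simps)
  finally show ?thesis by (simp add: abs_minus_commute)
qed

lemma tv_nonneg: "tv_coord N \<nu> \<rho> j \<ge> 0"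
  unfolding tv_coord_def by (simp add: sum_nonneg)

lemma tv_sym: "tv_coord N \<nu> \<rho> j = tv_coord N \<rho> \<nu> j"
  unfolding tv_coord_def by (simp add: abs_minus_commute)

lemma supp1_sub: "supp1 N \<nu> a \<subseteq> {-1, 1}" unfolding supp1_def by auto

lemma finite_supp1: "finite (supp1 N \<nu> a)"
  by (rule finite_subset[OF supp1_sub]) simp

lemma Psi_le:
  assumes ne: "supp1 N \<nu> a \<noteq> {}" and B: "B \<ge> 0"
    and tv: "1 \<in> supp1 N \<nu> a \<Longrightarrow> -1 \<in> supp1 N \<nu> a \<Longrightarrow>
             tv_coord N (cond N \<nu> (\<lambda>\<sigma>. \<sigma> a = 1)) (cond N \<nu> (\<lambda>\<sigma>. \<sigma> a = -1)) b \<le> B"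
  shows "Psi N \<nu> a b \<le> B"
  unfolding Psi_def
proof (rule Max.boundedI)
  show "finite ((\<lambda>(x, y). tv_coord N (cond N \<nu> (\<lambda>\<sigma>. \<sigma> a = x)) (cond N \<nu> (\<lambda>\<sigma>. \<sigma> a = y)) b) ` (supp1 N \<nu> a \<times> supp1 N \<nu> a))"
    by (intro finite_imageI finite_cartesian_product finite_supp1)
  show "(\<lambda>(x, y). tv_coord N (cond N \<nu> (\<lambda>\<sigma>. \<sigma> a = x)) (cond N \<nu> (\<lambda>\<sigma>. \<sigma> a = y)) b) ` (supp1 N \<nu> a \<times> supp1 N \<nu> a) \<noteq> {}"
    using ne by auto
  fix t assume "t \<in> (\<lambda>(x, y). tv_coord N (cond N \<nu> (\<lambda>\<sigma>. \<sigma> a = x)) (cond N \<nu> (\<lambda>\<sigma>. \<sigma> a = y)) b) ` (supp1 N \<nu> a \<times> supp1 N \<nu> a)"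
  then obtain x y where xy: "x \<in> supp1 N \<nu> a" "y \<in> supp1 N \<nu> a"
    and t: "t = tv_coord N (cond N \<nu> (\<lambda>\<sigma>. \<sigma> a = x)) (cond N \<nu> (\<lambda>\<sigma>. \<sigma> a = y)) b" by auto
  have xv: "x \<in> {-1,1}" "y \<in> {-1,1}" using xy supp1_sub[of N \<nu> a] by blast+
  show "t \<le> B"
  proof (cases "x = y")
    case True then show ?thesis using t B by (simp add: tv_coord_def)
  next
    case False
    then have "(x = 1 \<and> y = -1) \<or> (x = -1 \<and> y = 1)" using xv by auto
    then show ?thesis
    proof
      assume "x = 1 \<and> y = -1" then show ?thesis using tv xy t by simp
    next
      assume xy': "x = -1 \<and> y = 1"
      have "t = tv_coord N (cond N \<nu> (\<lambda>\<sigma>. \<sigma> a = 1)) (cond N \<nu> (\<lambda>\<sigma>. \<sigma> a = -1)) b"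
        using t xy' by (subst tv_sym) simp
      then show ?thesis using tv xy xy' by simp
    qed
  qed
qed

lemma Psi_nonneg:
  assumes ne: "supp1 N \<nu> a \<noteq> {}"
  shows "Psi N \<nu> a b \<ge> 0"
proof -
  obtain x where x: "x \<in> supp1 N \<nu> a" using ne by auto
  have fin: "finite ((\<lambda>(x, y). tv_coord N (cond N \<nu> (\<lambda>\<sigma>. \<sigma> a = x)) (cond N \<nu> (\<lambda>\<sigma>. \<sigma> a = y)) b) ` (supp1 N \<nu> a \<times> supp1 N \<nu> a))"
    by (intro finite_imageI finite_cartesian_product finite_supp1)
  have "tv_coord N (cond N \<nu> (\<lambda>\<sigma>. \<sigma> a = x)) (cond N \<nu> (\<lambda>\<sigma>. \<sigma> a = x)) b \<le> Psi N \<nu> a b"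
    unfolding Psi_def by (rule Max_ge[OF fin]) (rule image_eqI[of _ _ "(x,x)"], simp, simp add: x)
  moreover have "0 \<le> tv_coord N (cond N \<nu> (\<lambda>\<sigma>. \<sigma> a = x)) (cond N \<nu> (\<lambda>\<sigma>. \<sigma> a = x)) b"
    by (rule tv_nonneg)
  ultimately show ?thesis by linarith
qed

lemma Wt_nonneg:
  assumes "\<And>\<sigma>. \<nu> \<sigma> \<ge> 0" "\<And>i. i \<in> N \<Longrightarrow> lam i \<ge> 0"
  shows "Wt N lam \<nu> E \<ge> 0"
  unfolding Wt_def using assms by (intro sum_nonneg) (auto intro!: mult_nonneg_nonneg prod_nonneg)

lemma Rd_nonneg:
  assumes "\<And>X. \<mu> X \<ge> 0"
  shows "Rd N \<mu> k Y \<ge> 0"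
  unfolding Rd_def using assms by (auto simp: Let_def)

locale mctx =
  fixes N :: "'i set" and \<mu> :: "('i \<Rightarrow> int) \<Rightarrow> real" and k :: nat and lam :: "'i \<times> nat \<Rightarrow> real"
    and \<epsilon> \<eta> :: real and \<Lambda> :: "('i \<times> nat) set" and \<tau> :: "'i \<times> nat \<Rightarrow> int"
  assumes dist: "is_dist N \<mu>" and m_pos: "mu_min_neg N \<mu> > 0" and eps: "\<epsilon> > 0" and eta: "\<eta> > 0"
    and kbig: "real k \<ge> 10 * (1 + \<epsilon>) / mu_min_neg N \<mu>"
    and clc: "complete_limited_correlation N \<eta> \<epsilon> \<mu>"
    and lam: "\<And>a. a \<in> N \<times> {1..k} \<Longrightarrow> 0 < lam a \<and> lam a \<le> 1 + \<epsilon>"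
    and LI: "\<Lambda> \<subseteq> N \<times> {1..k}"
    and tau: "\<tau> \<in> supp_marg (N \<times> {1..k}) (tilt (N \<times> {1..k}) lam (Rd N \<mu> k)) \<Lambda>"
begin

abbreviation "I \<equiv> N \<times> {1..k}"
abbreviation "m \<equiv> mu_min_neg N \<mu>"
definition "TT z = Tn N \<mu> (phiZ lam k z)"
definition "\<Phi> = phiZ lam k \<tau>"
definition "D = {l\<in>N. \<Phi> l 1 > 0 \<and> \<Phi> l (-1) > 0}"
definition "\<nu> = pin I (tilt I lam (Rd N \<mu> k)) \<Lambda> \<tau>"
abbreviation "Wr E \<equiv> Wt I lam (Rd N \<mu> k) E"

lemma N: "finite N" using dist by (simp add: is_dist_def)
lemma mu0: "\<mu> X \<ge> 0" using dist by (simp add: is_dist_def)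
lemma muout: "X \<notin> cube N \<Longrightarrow> \<mu> X = 0" using dist by (simp add: is_dist_def)
lemma fI: "finite I" using N by simp

lemma kpos: "k > 0"
proof -
  have "10 * (1 + \<epsilon>) / m > 0" using eps m_pos by simp
  then show ?thesis using kbig by (metis gr0I of_nat_0 order.strict_trans2 less_irrefl)
qed

lemma lam_small: "a \<in> I \<Longrightarrow> 10 * (lam a / real k) \<le> m"
proof -
  assume a: "a \<in> I"
  have "10 * (1 + \<epsilon>) \<le> real k * m" using kbig m_pos by (simp add: divide_le_eq mult.commute)
  moreover have "lam a \<le> 1 + \<epsilon>" using lam[OF a] by simp
  moreover have "10 * lam a \<le> 10 * (1 + \<epsilon>)" using lam[OF a] by simp
  ultimately have "10 * lam a \<le> real k * m" by linarith
  then show ?thesis using kpos by (simp add: field_simps)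
qed

lemma lamnn: "j \<in> {1..k} \<Longrightarrow> l \<in> N \<Longrightarrow> lam (l,j) \<ge> 0"
  using lam[of "(l,j)"] by auto

lemma Wr_EV: "Wr (\<lambda>Y. \<forall>a\<in>I. z a \<noteq> 0 \<longrightarrow> Y a = z a) = TT z"
  unfolding TT_def using fiber[of N \<mu> k lam z] N muout by blast

lemma TT_nonneg: "TT z \<ge> 0"
  unfolding TT_def by (rule Tn_nonneg[OF mu0]) (auto intro: phiZ_nonneg lamnn)

lemma tau_cube: "\<tau> \<in> cube \<Lambda>" using tau by (simp add: supp_marg_def)
lemma tau_out: "a \<notin> \<Lambda> \<Longrightarrow> \<tau> a = 0" using cube_out[OF tau_cube] .
lemma tau_vals: "\<tau> a \<in> {-1, 0, 1}"
  using cube_out[OF tau_cube, of a] cube_val[OF tau_cube, of a] by (cases "a \<in> \<Lambda>") auto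

lemma Wr_R: "Wr (\<lambda>Y. restr Y \<Lambda> = \<tau>) = TT \<tau>"
proof -
  have "Wr (\<lambda>Y. restr Y \<Lambda> = \<tau>) = Wr (\<lambda>Y. \<forall>a\<in>I. \<tau> a \<noteq> 0 \<longrightarrow> Y a = \<tau> a)"
    by (rule Wt_cong) (rule EV_restr[OF tau_cube LI])
  then show ?thesis using Wr_EV by simp
qed

lemma Wr_nonneg: "Wr E \<ge> 0"
  by (rule Wt_nonneg) (use Rd_nonneg[OF mu0] lam in \<open>auto simp: less_imp_le\<close>)

lemma TT_tau_pos: "TT \<tau> > 0" and Wr_True: "Wr (\<lambda>_. True) \<noteq> 0"
proof -
  have "marg I (tilt I lam (Rd N \<mu> k)) \<Lambda> \<tau> > 0" using tau by (simp add: supp_marg_def)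
  then have "Wr (\<lambda>Y. restr Y \<Lambda> = \<tau>) / Wr (\<lambda>_. True) > 0" unfolding marg_def prob_tilt .
  then have "TT \<tau> / Wr (\<lambda>_. True) > 0" unfolding Wr_R .
  then show "TT \<tau> > 0" "Wr (\<lambda>_. True) \<noteq> 0" using Wr_nonneg[of "\<lambda>_. True"] TT_nonneg[of \<tau>]
    by (auto simp: zero_less_divide_iff)
qed

lemma prob_nu: "prob I \<nu> E = Wr (\<lambda>Y. restr Y \<Lambda> = \<tau> \<and> E Y) / TT \<tau>"
  unfolding \<nu>_def prob_pin_tilt[OF Wr_True] Wr_R ..

lemma prob_nu1:
  assumes a: "a \<in> I - \<Lambda>" and x: "x \<noteq> 0"
  shows "prob I \<nu> (\<lambda>Y. Y a = x) = TT (\<tau>(a := x)) / TT \<tau>"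
proof -
  have "Wr (\<lambda>Y. restr Y \<Lambda> = \<tau> \<and> Y a = x) = Wr (\<lambda>Y. \<forall>l\<in>I. (\<tau>(a := x)) l \<noteq> 0 \<longrightarrow> Y l = (\<tau>(a := x)) l)"
    by (rule Wt_cong) (rule EV_restr1[OF tau_cube LI _ a x])
  then have "Wr (\<lambda>Y. restr Y \<Lambda> = \<tau> \<and> Y a = x) = TT (\<tau>(a := x))" unfolding Wr_EV .
  then show ?thesis unfolding prob_nu by simp
qed

lemma prob_nu2:
  assumes a: "a \<in> I - \<Lambda>" and x: "x \<noteq> 0" and b: "b \<in> I - \<Lambda>" and y: "y \<noteq> 0" and ab: "a \<noteq> b"
  shows "prob I (cond I \<nu> (\<lambda>Y. Y a = x)) (\<lambda>Y. Y b = y) = TT (\<tau>(a := x, b := y)) / TT (\<tau>(a := x))"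
proof -
  have "Wr (\<lambda>Y. restr Y \<Lambda> = \<tau> \<and> Y a = x \<and> Y b = y) = Wr (\<lambda>Y. \<forall>l\<in>I. (\<tau>(a := x, b := y)) l \<noteq> 0 \<longrightarrow> Y l = (\<tau>(a := x, b := y)) l)"
    by (rule Wt_cong) (rule EV_restr2[OF tau_cube LI _ a x b y ab])
  then have e1: "Wr (\<lambda>Y. restr Y \<Lambda> = \<tau> \<and> Y a = x \<and> Y b = y) = TT (\<tau>(a := x, b := y))" unfolding Wr_EV .
  have "Wr (\<lambda>Y. restr Y \<Lambda> = \<tau> \<and> Y a = x) = Wr (\<lambda>Y. \<forall>l\<in>I. (\<tau>(a := x)) l \<noteq> 0 \<longrightarrow> Y l = (\<tau>(a := x)) l)"
    by (rule Wt_cong) (rule EV_restr1[OF tau_cube LI _ a x])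
  then have e2: "Wr (\<lambda>Y. restr Y \<Lambda> = \<tau> \<and> Y a = x) = TT (\<tau>(a := x))" unfolding Wr_EV .
  have R: "Wr (\<lambda>Y. restr Y \<Lambda> = \<tau>) \<noteq> 0" using Wr_R TT_tau_pos by simp
  show ?thesis unfolding \<nu>_def prob_cond_pin_tilt[OF Wr_True R] e1 e2 ..
qed

lemma prob_nu_nonneg: "prob I \<nu> E \<ge> 0"
  unfolding prob_nu using Wr_nonneg TT_tau_pos by simp

lemma prob_nu_True: "prob I \<nu> (\<lambda>_. True) = 1"
  unfolding prob_nu using Wr_R TT_tau_pos by simp

lemma supp1_ne: "a \<in> I \<Longrightarrow> supp1 I \<nu> a \<noteq> {}"
proof
  assume a: "a \<in> I" and e: "supp1 I \<nu> a = {}"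
  have "prob I \<nu> (\<lambda>Y. True \<and> Y a = 1) + prob I \<nu> (\<lambda>Y. True \<and> Y a = -1) = 1"
    using prob_split_val[OF a, of \<nu> "\<lambda>_. True"] prob_nu_True by simp
  moreover have "prob I \<nu> (\<lambda>Y. Y a = 1) \<le> 0" "prob I \<nu> (\<lambda>Y. Y a = -1) \<le> 0"
    using e unfolding supp1_def by (auto simp: not_less)
  ultimately show False by simp
qed

lemma supp1_iff:
  assumes a: "a \<in> I - \<Lambda>" and x: "x \<in> {-1, 1}"
  shows "x \<in> supp1 I \<nu> a \<longleftrightarrow> TT (\<tau>(a := x)) > 0"
  using x prob_nu1[OF a, of x] TT_tau_pos unfolding supp1_def by (auto simp: zero_less_divide_iff)

lemma Phi_nonneg: "l \<in> N \<Longrightarrow> \<Phi> l x \<ge> 0"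
  unfolding \<Phi>_def by (rule phiZ_nonneg) (rule lamnn)

lemma Phi_m1: "\<Phi> l (-1) = (if hz k \<tau> l then 1 else 0)"
  unfolding \<Phi>_def by (rule phiZ_m1)

lemma D_sub: "D \<subseteq> N" unfolding D_def by auto

lemma D_hz: "l \<in> D \<Longrightarrow> hz k \<tau> l" and D_m1: "l \<in> D \<Longrightarrow> \<Phi> l (-1) = 1"
  unfolding D_def using Phi_m1 by (auto split: if_splits)

lemma TT_tau: "TT \<tau> = Tn N \<mu> \<Phi>" unfolding TT_def \<Phi>_def ..

end

lemma frac_le_helper:
  fixes x den y L :: real
  assumes "den > 0" "L > 0" "x * (9 * L) \<le> 10 * y * den"
  shows "x / den \<le> 10 / 9 * (y / L)"
proof -
  have "x / den = (x * (9 * L)) / (den * (9 * L))" using assms by simp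
  also have "\<dots> \<le> (10 * y * den) / (den * (9 * L))"
    using assms by (intro divide_right_mono) auto
  also have "\<dots> = 10 / 9 * (y / L)" using assms by simp
  finally show ?thesis .
qed

lemma alg_same:
  fixes la lb L T1 Tm m :: real
  assumes la: "10 * la \<le> m" and fl: "m * T1 \<le> Tm" and T1: "T1 \<ge> 0" and L: "L > 0" and Lla: "L - la \<ge> 0"
    and lb: "lb \<ge> 0" and den: "(L - la) * T1 + Tm > 0" and A: "A \<ge> 0" and la0: "la \<ge> 0"
  shows "lb * T1 / ((L - la) * T1 + Tm) \<le> 10 / 9 * (lb / L * (A + 1))"
proof -
  have m0: "m \<ge> 0" using la la0 by linarith
  have "m * T1 \<ge> 0" using m0 T1 by simp
  have "10 * la * T1 \<le> m * T1" using la T1 by (intro mult_right_mono) auto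
  then have h10: "10 * (la * T1) \<le> m * T1" by (simp add: mult.assoc)
  have LT: "L * T1 \<ge> 0" using L T1 by simp
  have ex: "(L - la) * T1 = L * T1 - la * T1" by (simp add: algebra_simps)
  have key: "9 * (L * T1) \<le> 10 * ((L - la) * T1 + Tm)"
  proof -
    define P where "P = L * T1"
    define Q where "Q = la * T1"
    define R where "R = m * T1"
    have "10 * Q \<le> R" "R \<le> Tm" "0 \<le> P" "0 \<le> R" using h10 fl LT \<open>m * T1 \<ge> 0\<close> unfolding P_def Q_def R_def by auto
    then have "9 * P \<le> 10 * (P - Q + Tm)" by (simp add: algebra_simps)
    then show ?thesis unfolding ex P_def Q_def .
  qed
  have "lb * T1 * (9 * L) \<le> 10 * lb * ((L - la) * T1 + Tm)"
  proof -
    have "lb * (9 * (L * T1)) \<le> lb * (10 * ((L - la) * T1 + Tm))" using key lb by (rule mult_left_mono)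
    then show ?thesis by (simp add: algebra_simps)
  qed
  then have "lb * T1 / ((L - la) * T1 + Tm) \<le> 10 / 9 * (lb / L)"
    by (rule frac_le_helper[OF den L])
  also have "\<dots> \<le> 10 / 9 * (lb / L * (A + 1))"
  proof -
    have "lb / L \<ge> 0" using lb L by simp
    then have h: "lb / L \<le> lb / L * (A + 1)" using mult_left_mono[of 1 "A+1" "lb/L"] A by simp
    show ?thesis using h by (rule mult_left_mono) simp
  qed
  finally show ?thesis .
qed

lemma alg_cross:
  fixes la lb L L' s t u v m :: real
  assumes la: "10 * la \<le> m" and fl: "m * u \<le> v" and u: "u > 0" and L: "L > 0" and L': "L' > 0"
    and Lla: "L - la \<ge> 0" and la0: "la > 0" and lb: "lb \<ge> 0"
  shows "\<bar>la * lb * s / (la * u) - lb * ((L - la) * s + t) / ((L - la) * u + v)\<bar>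
      \<le> 10 / 9 * (lb / L' * \<bar>L * L' * s / (L * u) - L' * (L * s + t) / (L * u + v)\<bar>)"
proof -
  have m0: "m \<ge> 0" using la la0 by linarith
  have mu0: "m * u \<ge> 0" using m0 u by simp
  have v0: "v \<ge> 0" using mu0 fl by linarith
  define X where "X = s * v - u * t"
  have Lu: "(L - la) * u \<ge> 0" using Lla u by simp
  have d2: "(L - la) * u + v > 0"
  proof -
    have "10 * la * u \<le> m * u" using la u by (intro mult_right_mono) auto
    moreover have "la * u > 0" using la0 u by simp
    ultimately have "v > 0" using fl by (simp add: algebra_simps)
    then show ?thesis using Lu by linarith
  qed
  have d1: "L * u + v > 0" using L u v0 by (simp add: add_pos_nonneg)
  have e1: "la * lb * s / (la * u) - lb * ((L - la) * s + t) / ((L - la) * u + v) = lb * X / (u * ((L - la) * u + v))"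
  proof -
    have "la * lb * s / (la * u) = lb * s / u" using la0 by simp
    moreover have "lb * s / u - lb * ((L - la) * s + t) / ((L - la) * u + v)
        = (lb * s * ((L - la) * u + v) - lb * ((L - la) * s + t) * u) / (u * ((L - la) * u + v))"
      using u d2 by (simp add: diff_frac_eq)
    moreover have "lb * s * ((L - la) * u + v) - lb * ((L - la) * s + t) * u = lb * X"
      unfolding X_def by (simp add: algebra_simps)
    ultimately show ?thesis by simp
  qed
  have e2: "L * L' * s / (L * u) - L' * (L * s + t) / (L * u + v) = L' * X / (u * (L * u + v))"
  proof -
    have "L * L' * s / (L * u) = L' * s / u" using L by simp
    moreover have "L' * s / u - L' * (L * s + t) / (L * u + v)
        = (L' * s * (L * u + v) - L' * (L * s + t) * u) / (u * (L * u + v))"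
      using u d1 by (simp add: diff_frac_eq)
    moreover have "L' * s * (L * u + v) - L' * (L * s + t) * u = L' * X"
      unfolding X_def by (simp add: algebra_simps)
    ultimately show ?thesis by simp
  qed
  have key: "9 * (L * u + v) \<le> 10 * ((L - la) * u + v)"
  proof -
    have "10 * la * u \<le> m * u" using la u by (intro mult_right_mono) auto
    then have "10 * (la * u) \<le> v" using fl by (simp add: mult.assoc)
    moreover have "L * u \<ge> 0" using L u by simp
    ultimately show ?thesis using v0 by (simp add: algebra_simps)
  qed
  have "\<bar>lb * X / (u * ((L - la) * u + v))\<bar> = lb * \<bar>X\<bar> / (u * ((L - la) * u + v))"
    using lb u d2 by (simp add: abs_mult abs_divide)
  also have "\<dots> \<le> 10 / 9 * (lb * \<bar>X\<bar> / (u * (L * u + v)))"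
  proof -
    have p: "lb * \<bar>X\<bar> \<ge> 0" using lb by simp
    have "(lb * \<bar>X\<bar>) * (9 * (u * (L * u + v))) = (lb * \<bar>X\<bar> * u) * (9 * (L * u + v))" by (simp add: algebra_simps)
    also have "\<dots> \<le> (lb * \<bar>X\<bar> * u) * (10 * ((L - la) * u + v))"
      using key p u by (intro mult_left_mono) auto
    also have "\<dots> = 10 * (lb * \<bar>X\<bar>) * (u * ((L - la) * u + v))" by (simp add: algebra_simps)
    finally have "(lb * \<bar>X\<bar>) * (9 * (u * (L * u + v))) \<le> 10 * (lb * \<bar>X\<bar>) * (u * ((L - la) * u + v))" .
    moreover have "u * ((L - la) * u + v) > 0" using u d2 by simp
    moreover have "u * (L * u + v) > 0" using u d1 by simp
    ultimately show ?thesis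
      using frac_le_helper[of "u * ((L - la) * u + v)" "u * (L * u + v)" "lb * \<bar>X\<bar>" "lb * \<bar>X\<bar>"] by simp
  qed
  also have "lb * \<bar>X\<bar> / (u * (L * u + v)) = lb / L' * \<bar>L' * X / (u * (L * u + v))\<bar>"
    using L' u d1 by (simp add: abs_mult abs_divide)
  finally show ?thesis unfolding e1 e2 .
qed

lemma Wt_mono_event:
  assumes "\<And>\<sigma>. \<nu> \<sigma> \<ge> 0" "\<And>i. i \<in> N \<Longrightarrow> lam i \<ge> 0" "\<And>\<sigma>. \<sigma> \<in> cube N \<Longrightarrow> E \<sigma> \<Longrightarrow> E' \<sigma>"
  shows "Wt N lam \<nu> E \<le> Wt N lam \<nu> E'"
  unfolding Wt_def using assms by (intro sum_mono) (auto intro!: mult_nonneg_nonneg prod_nonneg)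

context mctx begin

definition "T1 i = Tn N \<mu> (\<Phi>(i := dl 1))"
definition "Tm i = Tn N \<mu> (\<Phi>(i := dl (-1)))"
definition "Q i i' f g = Tn N \<mu> (\<Phi>(i := f, i' := g))"

lemma TT_split1:
  assumes i: "i \<in> N" and z: "\<And>l. l \<noteq> i \<Longrightarrow> phiZ lam k z l = \<Phi> l"
  shows "TT z = phiZ lam k z i 1 * T1 i + phiZ lam k z i (-1) * Tm i"
proof -
  have e: "(phiZ lam k z)(i := d) = \<Phi>(i := d)" for d using z by (intro ext) auto
  show ?thesis unfolding TT_def T1_def Tm_def using Tn_split[OF N i, of \<mu> "phiZ lam k z"] e by simp
qed

lemma flipT: "i \<in> N \<Longrightarrow> m * T1 i \<le> Tm i"
  unfolding T1_def Tm_def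
  by (rule Tn_flip[OF N _ mu0]) (auto intro: Phi_nonneg mu_flip[OF dist])

lemma T1_nonneg: "T1 i \<ge> 0" and Tm_nonneg: "Tm i \<ge> 0"
  unfolding T1_def Tm_def by (rule Tn_nonneg[OF mu0], auto simp: dl_def intro: Phi_nonneg)+

lemma TT_split2:
  assumes ii: "i \<noteq> i'" and z: "\<And>l. l \<noteq> i \<Longrightarrow> l \<noteq> i' \<Longrightarrow> phiZ lam k z l = \<Phi> l"
  shows "TT z = Q i i' (phiZ lam k z i) (phiZ lam k z i')"
proof -
  have "phiZ lam k z = \<Phi>(i := phiZ lam k z i, i' := phiZ lam k z i')" using z ii by (intro ext) auto
  then show ?thesis unfolding TT_def Q_def by simp
qed

lemma Q_split_i:
  assumes ii: "i \<noteq> i'" and i: "i \<in> N"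
  shows "Q i i' f g = f 1 * Q i i' (dl 1) g + f (-1) * Q i i' (dl (-1)) g"
proof -
  have e: "(\<Phi>(i := f, i' := g))(i := d) = \<Phi>(i := d, i' := g)" for d using ii by (intro ext) auto
  have f: "(\<Phi>(i := f, i' := g)) i = f" using ii by simp
  show ?thesis unfolding Q_def using Tn_split[OF N i, of \<mu> "\<Phi>(i := f, i' := g)"] e f by simp
qed

lemma Q_split_i':
  assumes ii: "i \<noteq> i'" and i': "i' \<in> N"
  shows "Q i i' f g = g 1 * Q i i' f (dl 1) + g (-1) * Q i i' f (dl (-1))"
proof -
  have e: "(\<Phi>(i := f, i' := g))(i' := d) = \<Phi>(i := f, i' := d)" for d by (intro ext) auto
  show ?thesis unfolding Q_def using Tn_split[OF N i', of \<mu> "\<Phi>(i := f, i' := g)"] e by simp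
qed

lemma Q_T1: "i \<noteq> i' \<Longrightarrow> Q i i' (dl 1) (\<Phi> i') = T1 i" and Q_Tm: "i \<noteq> i' \<Longrightarrow> Q i i' (dl (-1)) (\<Phi> i') = Tm i"
proof -
  assume ii: "i \<noteq> i'"
  have "\<Phi>(i := d, i' := \<Phi> i') = \<Phi>(i := d)" for d using ii by (intro ext) auto
  then show "Q i i' (dl 1) (\<Phi> i') = T1 i" "Q i i' (dl (-1)) (\<Phi> i') = Tm i"
    unfolding Q_def T1_def Tm_def by simp_all
qed

definition "lam' l = (if l \<in> D then \<Phi> l 1 else 1)"
definition "\<tau>' l = (if l \<in> N \<and> l \<notin> D then (if \<Phi> l 1 > 0 then 1 else -1) else (0::int))"
definition "\<nu>' = pin N (tilt N lam' \<mu>) (N - D) \<tau>'"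
definition "cc l = (if l \<in> D then 1 else \<Phi> l (\<tau>' l))"
definition "ind (c::int) (y::int) = (if c = 0 \<or> c = y then 1 else (0::real))"
definition "\<Phi>w w = (\<lambda>l x. if l \<in> D then ind (w l) x * \<Phi> l x else \<Phi> l x)"
definition "CC = (\<Prod>l\<in>N. cc l)"
abbreviation "Wp E \<equiv> Wt N lam' \<mu> E"

lemma Phi_nD: "l \<in> N \<Longrightarrow> l \<notin> D \<Longrightarrow> \<Phi> l 1 = 0 \<or> \<Phi> l (-1) = 0"
  unfolding D_def using Phi_nonneg[of l 1] Phi_nonneg[of l "-1"] by auto

lemma cc_pos: "l \<in> N \<Longrightarrow> cc l > 0"
proof -
  assume l: "l \<in> N"
  show "cc l > 0"
  proof (cases "l \<in> D")
    case True then show ?thesis by (simp add: cc_def)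
  next
    case False
    show ?thesis
    proof (cases "\<Phi> l 1 > 0")
      case True then show ?thesis using False l by (simp add: cc_def \<tau>'_def)
    next
      case F2: False
      then have z1: "\<Phi> l 1 = 0" using Phi_nonneg[OF l, of 1] by simp
      have "\<Phi> l (-1) \<noteq> 0"
      proof
        assume "\<Phi> l (-1) = 0"
        then have "Tn N \<mu> \<Phi> = 0" using Tn_zero[OF N l, of \<Phi> \<mu>] z1 by simp
        then show False using TT_tau_pos TT_tau by simp
      qed
      then show ?thesis using Phi_nonneg[OF l, of "-1"] F2 False l by (simp add: cc_def \<tau>'_def)
    qed
  qed
qed

lemma CC_pos: "CC > 0" unfolding CC_def using cc_pos by (simp add: prod_pos)

lemma Phiw_scale:
  assumes w: "\<And>l. l \<in> N - D \<Longrightarrow> w l = \<tau>' l" and l: "l \<in> N" and x: "x \<in> {-1, 1}"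
  shows "\<Phi>w w l x = cc l * ((if w l = 0 \<or> w l = x then 1 else 0) * (if x = 1 then lam' l else 1))"
proof (cases "l \<in> D")
  case True
  then show ?thesis using x D_m1[OF True] by (auto simp: \<Phi>w_def cc_def lam'_def ind_def)
next
  case False
  have wl: "w l = \<tau>' l" using w l False by simp
  show ?thesis
  proof (cases "\<Phi> l 1 > 0")
    case True
    then have "\<Phi> l (-1) = 0" using Phi_nD[OF l False] by auto
    then show ?thesis using True False l x wl by (auto simp: \<Phi>w_def cc_def lam'_def \<tau>'_def)
  next
    case F2: False
    then have "\<Phi> l 1 = 0" using Phi_nonneg[OF l, of 1] by simp
    then show ?thesis using F2 False l x wl by (auto simp: \<Phi>w_def cc_def lam'_def \<tau>'_def)
  qed
qed

lemma Wp_EV: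
  assumes w: "\<And>l. l \<in> N - D \<Longrightarrow> w l = \<tau>' l"
  shows "Wp (\<lambda>\<sigma>. \<forall>l\<in>N. w l \<noteq> 0 \<longrightarrow> \<sigma> l = w l) = Tn N \<mu> (\<Phi>w w) / CC"
proof -
  have "Tn N \<mu> (\<Phi>w w) = CC * Tn N \<mu> (\<lambda>l x. (if w l = 0 \<or> w l = x then 1 else 0) * (if x = 1 then lam' l else 1))"
    unfolding CC_def by (rule Tn_scale) (rule Phiw_scale[OF w])
  then show ?thesis unfolding Wt_Tn[OF N] using CC_pos by simp
qed

lemma tau'_cube: "\<tau>' \<in> cube (N - D)"
  unfolding cube_def \<tau>'_def by auto

lemma tau'_out: "l \<in> D \<Longrightarrow> \<tau>' l = 0" unfolding \<tau>'_def by auto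

lemma Phiw_tau': "Tn N \<mu> (\<Phi>w \<tau>') = TT \<tau>"
  unfolding TT_tau by (rule Tn_cong) (auto simp: \<Phi>w_def tau'_out ind_def)

lemma Wp_R: "Wp (\<lambda>X. restr X (N - D) = \<tau>') = TT \<tau> / CC"
proof -
  have "Wp (\<lambda>X. restr X (N - D) = \<tau>') = Wp (\<lambda>\<sigma>. \<forall>l\<in>N. \<tau>' l \<noteq> 0 \<longrightarrow> \<sigma> l = \<tau>' l)"
    by (rule Wt_cong) (rule EV_restr[OF tau'_cube], auto)
  then show ?thesis unfolding Wp_EV[OF refl] Phiw_tau' .
qed

lemma lam'_ok: "l \<in> N \<Longrightarrow> 0 < lam' l \<and> lam' l \<le> 1 + \<epsilon>"
proof -
  assume l: "l \<in> N"
  show ?thesis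
  proof (cases "l \<in> D")
    case False then show ?thesis using eps by (simp add: lam'_def)
  next
    case True
    have "\<Phi> l 1 = (\<Sum>j\<in>{1..k}. lam (l,j) / real k * (if gz k \<tau> l j then 1 else 0))"
      by (simp add: \<Phi>_def phiZ_def)
    also have "\<dots> \<le> (\<Sum>j\<in>{1..k}. (1 + \<epsilon>) / real k)"
    proof (rule sum_mono)
      fix j assume j: "j \<in> {1..k}"
      have "lam (l,j) / real k \<le> (1 + \<epsilon>) / real k" using lam[of "(l,j)"] l j kpos by (simp add: divide_right_mono)
      moreover have "lam (l,j) / real k \<ge> 0" using lamnn[OF j l] by simp
      ultimately show "lam (l,j) / real k * (if gz k \<tau> l j then 1 else 0) \<le> (1 + \<epsilon>) / real k" using eps
        by (auto simp: divide_nonneg_pos)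
    qed
    also have "\<dots> = 1 + \<epsilon>" using kpos by simp
    finally show ?thesis using True by (simp add: lam'_def D_def)
  qed
qed

lemma Wp_nonneg: "Wp E \<ge> 0"
  by (rule Wt_nonneg) (use mu0 lam'_ok in \<open>auto simp: less_imp_le\<close>)

lemma Wp_R_pos: "Wp (\<lambda>X. restr X (N - D) = \<tau>') > 0"
  unfolding Wp_R using TT_tau_pos CC_pos by simp

lemma Wp_True: "Wp (\<lambda>_. True) > 0"
proof -
  have "Wp (\<lambda>X. restr X (N - D) = \<tau>') \<le> Wp (\<lambda>_. True)"
    by (rule Wt_mono_event) (use mu0 lam'_ok in \<open>auto simp: less_imp_le\<close>)
  then show ?thesis using Wp_R_pos by simp
qed

lemma tau'_supp: "\<tau>' \<in> supp_marg N (tilt N lam' \<mu>) (N - D)"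
  unfolding supp_marg_def marg_def prob_tilt using tau'_cube Wp_R_pos Wp_True by simp

lemma A_spec: "spec_radius D (PsiAbsCor N \<nu>') \<le> \<eta>"
proof -
  have "limited_correlation N \<eta> (tilt N lam' \<mu>)" using clc lam'_ok unfolding complete_limited_correlation_def by blast
  then have "spec_radius (N - (N - D)) (PsiAbsCor N \<nu>') \<le> \<eta>"
    unfolding limited_correlation_def \<nu>'_def using tau'_supp by blast
  moreover have "N - (N - D) = D" using D_sub by auto
  ultimately show ?thesis by simp
qed

end

context mctx begin

lemma ind0: "(\<lambda>y. ind 0 y * f y) = f" by (simp add: ind_def)

lemma Phiw_Q:
  assumes ii: "i \<noteq> i'" and i: "i \<in> D" and i': "i' \<in> D" and w: "\<And>l. l \<noteq> i \<Longrightarrow> l \<noteq> i' \<Longrightarrow> w l = \<tau>' l"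
  shows "Tn N \<mu> (\<Phi>w w) = Q i i' (\<lambda>y. ind (w i) y * \<Phi> i y) (\<lambda>y. ind (w i') y * \<Phi> i' y)"
  unfolding Q_def
proof (rule Tn_cong)
  fix l and x :: int assume l: "l \<in> N" and x: "x \<in> {-1, 1}"
  show "\<Phi>w w l x = (\<Phi>(i := \<lambda>y. ind (w i) y * \<Phi> i y, i' := \<lambda>y. ind (w i') y * \<Phi> i' y)) l x"
  proof (cases "l = i \<or> l = i'")
    case True then show ?thesis using i i' ii by (auto simp: \<Phi>w_def)
  next
    case False
    then show ?thesis using w[of l] tau'_out[of l] by (auto simp: \<Phi>w_def ind_def)
  qed
qed

lemma Wp_upd1:
  assumes ii: "i \<noteq> i'" and i: "i \<in> D" and i': "i' \<in> D" and x: "x \<noteq> 0"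
  shows "Wp (\<lambda>X. restr X (N - D) = \<tau>' \<and> X i = x) = Q i i' (\<lambda>y. ind x y * \<Phi> i y) (\<Phi> i') / CC"
proof -
  have "Wp (\<lambda>X. restr X (N - D) = \<tau>' \<and> X i = x) = Wp (\<lambda>\<sigma>. \<forall>l\<in>N. (\<tau>'(i := x)) l \<noteq> 0 \<longrightarrow> \<sigma> l = (\<tau>'(i := x)) l)"
    by (rule Wt_cong) (rule EV_restr1[OF tau'_cube], use i D_sub x in auto)
  also have "\<dots> = Tn N \<mu> (\<Phi>w (\<tau>'(i := x))) / CC" by (rule Wp_EV) (use i in auto)
  also have "Tn N \<mu> (\<Phi>w (\<tau>'(i := x))) = Q i i' (\<lambda>y. ind x y * \<Phi> i y) (\<lambda>y. ind (\<tau>' i') y * \<Phi> i' y)"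
    using Phiw_Q[OF ii i i', of "\<tau>'(i := x)"] ii by simp
  also have "(\<lambda>y. ind (\<tau>' i') y * \<Phi> i' y) = \<Phi> i'" using tau'_out[OF i'] by (simp add: ind0)
  finally show ?thesis .
qed

lemma Wp_upd1':
  assumes ii: "i \<noteq> i'" and i: "i \<in> D" and i': "i' \<in> D" and x: "x \<noteq> 0"
  shows "Wp (\<lambda>X. restr X (N - D) = \<tau>' \<and> X i' = x) = Q i i' (\<Phi> i) (\<lambda>y. ind x y * \<Phi> i' y) / CC"
proof -
  have "Wp (\<lambda>X. restr X (N - D) = \<tau>' \<and> X i' = x) = Wp (\<lambda>\<sigma>. \<forall>l\<in>N. (\<tau>'(i' := x)) l \<noteq> 0 \<longrightarrow> \<sigma> l = (\<tau>'(i' := x)) l)"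
    by (rule Wt_cong) (rule EV_restr1[OF tau'_cube], use i' D_sub x in auto)
  also have "\<dots> = Tn N \<mu> (\<Phi>w (\<tau>'(i' := x))) / CC" by (rule Wp_EV) (use i' in auto)
  also have "Tn N \<mu> (\<Phi>w (\<tau>'(i' := x))) = Q i i' (\<lambda>y. ind (\<tau>' i) y * \<Phi> i y) (\<lambda>y. ind x y * \<Phi> i' y)"
    using Phiw_Q[OF ii i i', of "\<tau>'(i' := x)"] ii by simp
  also have "(\<lambda>y. ind (\<tau>' i) y * \<Phi> i y) = \<Phi> i" using tau'_out[OF i] by (simp add: ind0)
  finally show ?thesis .
qed

lemma Wp_upd2:
  assumes ii: "i \<noteq> i'" and i: "i \<in> D" and i': "i' \<in> D" and x: "x \<noteq> 0" and y: "y \<noteq> 0"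
  shows "Wp (\<lambda>X. restr X (N - D) = \<tau>' \<and> X i = x \<and> X i' = y) = Q i i' (\<lambda>z. ind x z * \<Phi> i z) (\<lambda>z. ind y z * \<Phi> i' z) / CC"
proof -
  have "Wp (\<lambda>X. restr X (N - D) = \<tau>' \<and> X i = x \<and> X i' = y) = Wp (\<lambda>\<sigma>. \<forall>l\<in>N. (\<tau>'(i := x, i' := y)) l \<noteq> 0 \<longrightarrow> \<sigma> l = (\<tau>'(i := x, i' := y)) l)"
    by (rule Wt_cong) (rule EV_restr2[OF tau'_cube], use i i' ii D_sub x y in auto)
  also have "\<dots> = Tn N \<mu> (\<Phi>w (\<tau>'(i := x, i' := y))) / CC" by (rule Wp_EV) (use i i' in auto)
  also have "Tn N \<mu> (\<Phi>w (\<tau>'(i := x, i' := y))) = Q i i' (\<lambda>z. ind x z * \<Phi> i z) (\<lambda>z. ind y z * \<Phi> i' z)"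
    using Phiw_Q[OF ii i i', of "\<tau>'(i := x, i' := y)"] ii by simp
  finally show ?thesis .
qed

lemma Wp_R_ne: "Wp (\<lambda>X. restr X (N - D) = \<tau>') \<noteq> 0" using Wp_R_pos by simp
lemma Wp_True_ne: "Wt N lam' \<mu> (\<lambda>_. True) \<noteq> 0" using Wp_True by simp

lemma AbsCor_formula:
  assumes ii: "i \<noteq> i'" and i: "i \<in> D" and i': "i' \<in> D"
    and pos: "Q i i' (\<lambda>y. ind 1 y * \<Phi> i y) (\<Phi> i') > 0"
  shows "PsiAbsCor N \<nu>' i i' = \<bar>Q i i' (\<lambda>z. ind 1 z * \<Phi> i z) (\<lambda>z. ind 1 z * \<Phi> i' z) / Q i i' (\<lambda>y. ind 1 y * \<Phi> i y) (\<Phi> i')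
                                 - Q i i' (\<Phi> i) (\<lambda>y. ind 1 y * \<Phi> i' y) / TT \<tau>\<bar>"
proof -
  have p1: "prob N \<nu>' (\<lambda>X. X i = 1) = Q i i' (\<lambda>y. ind 1 y * \<Phi> i y) (\<Phi> i') / TT \<tau>"
    unfolding \<nu>'_def prob_pin_tilt[OF Wp_True_ne] Wp_upd1[OF ii i i' one_neq_zero] Wp_R using CC_pos by simp
  have p2: "prob N \<nu>' (\<lambda>X. X i' = 1) = Q i i' (\<Phi> i) (\<lambda>y. ind 1 y * \<Phi> i' y) / TT \<tau>"
    unfolding \<nu>'_def prob_pin_tilt[OF Wp_True_ne] Wp_upd1'[OF ii i i' one_neq_zero] Wp_R using CC_pos by simp
  have p3: "prob N (cond N \<nu>' (\<lambda>X. X i = 1)) (\<lambda>X. X i' = 1)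
       = Q i i' (\<lambda>z. ind 1 z * \<Phi> i z) (\<lambda>z. ind 1 z * \<Phi> i' z) / Q i i' (\<lambda>y. ind 1 y * \<Phi> i y) (\<Phi> i')"
    unfolding \<nu>'_def prob_cond_pin_tilt[OF Wp_True_ne Wp_R_ne] Wp_upd1[OF ii i i' one_neq_zero] Wp_upd2[OF ii i i' one_neq_zero one_neq_zero] using CC_pos by simp
  have "1 \<in> supp1 N \<nu>' i" unfolding supp1_def using p1 pos TT_tau_pos by simp
  then show ?thesis unfolding PsiAbsCor_def PsiCor_def using ii p2 p3 by simp
qed

end

context mctx begin

definition "pib b = (lam b / real k) / \<Phi> (fst b) 1"
definition "Ab = PsiAbsCor N \<nu>'"
definition "Bd a b = (if a = b then 1 else 0) + 10/9 * (if fst a \<in> D \<and> fst b \<in> D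
    then pib b * (Ab (fst a) (fst b) + (if fst a = fst b then 1 else 0)) else 0)"

lemma Ab_nonneg: "Ab i i' \<ge> 0" unfolding Ab_def PsiAbsCor_def by simp

lemma pib_nonneg: "b \<in> I \<Longrightarrow> pib b \<ge> 0"
  unfolding pib_def using lam[of b] Phi_nonneg[of "fst b" 1] by (auto intro!: divide_nonneg_nonneg)

lemma Bd_nonneg: "b \<in> I \<Longrightarrow> Bd a b \<ge> 0"
  unfolding Bd_def using pib_nonneg[of b] Ab_nonneg by (auto intro!: mult_nonneg_nonneg add_nonneg_nonneg)

lemma IL_dest:
  assumes "a \<in> I - \<Lambda>"
  obtains i j where "a = (i,j)" "i \<in> N" "j \<in> {1..k}" "\<tau> (i,j) = 0"
  using assms tau_out by (cases a) auto

lemma dead_blk: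
  assumes a: "a \<in> I - \<Lambda>" and nD: "fst a \<notin> D"
  shows "phiZ lam k (\<tau>(a := 1)) (fst a) 1 = 0" "phiZ lam k (\<tau>(a := 1)) (fst a) (-1) = 0"
proof -
  obtain i j where ij: "a = (i,j)" "i \<in> N" "j \<in> {1..k}" "\<tau> (i,j) = 0" using IL_dest[OF a] by blast
  have nd: "phiZ lam k \<tau> i 1 = 0 \<or> phiZ lam k \<tau> i (-1) = 0" using Phi_nD[of i] ij nD unfolding \<Phi>_def by simp
  from blk_dead[of j k \<tau> i lam, OF ij(3) ij(4) tau_vals _ nd] lamnn ij
  show "phiZ lam k (\<tau>(a := 1)) (fst a) 1 = 0" "phiZ lam k (\<tau>(a := 1)) (fst a) (-1) = 0" by auto
qed

lemma dead1:
  assumes a: "a \<in> I - \<Lambda>" and nD: "fst a \<notin> D"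
  shows "TT (\<tau>(a := 1)) = 0"
  unfolding TT_def by (rule Tn_zero[OF N, of "fst a"]) (use a dead_blk[OF a nD] in auto)

lemma dead2:
  assumes a: "a \<in> I - \<Lambda>" and b: "b \<in> I - \<Lambda>" and ab: "a \<noteq> b" and nD: "fst b \<notin> D"
  shows "TT (\<tau>(a := x, b := 1)) = 0"
proof -
  have tw: "\<tau>(a := x, b := 1) = (\<tau>(b := 1))(a := x)" using ab by (rule fun_upd_twist)
  have ta: "(\<tau>(b := 1)) a = 0" using a ab tau_out by auto
  have bN: "fst b \<in> N" using b by auto
  have lnn: "\<And>j. j \<in> {1..k} \<Longrightarrow> lam (fst b, j) \<ge> 0" using lamnn bN by blast
  have z: "phiZ lam k (\<tau>(a := x, b := 1)) (fst b) y = 0" if y: "y \<in> {1, -1}" for y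
  proof -
    have "phiZ lam k (\<tau>(a := x, b := 1)) (fst b) y \<le> phiZ lam k (\<tau>(b := 1)) (fst b) y"
      unfolding tw by (rule phiZ_mono[of "\<tau>(b := 1)" a k lam "fst b" x y, OF ta lnn])
    moreover have "phiZ lam k (\<tau>(b := 1)) (fst b) y = 0" using dead_blk[OF b nD] y by auto
    moreover have "phiZ lam k (\<tau>(a := x, b := 1)) (fst b) y \<ge> 0" by (rule phiZ_nonneg) (rule lnn)
    ultimately show ?thesis by linarith
  qed
  show ?thesis unfolding TT_def by (rule Tn_zero[OF N bN]) (use z in auto)
qed

lemma Psi_diag:
  assumes a: "a \<in> I - \<Lambda>"
  shows "Psi I \<nu> a a \<le> 1"
proof (rule Psi_le[OF supp1_ne])
  show "a \<in> I" using a by simp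
  assume s1: "1 \<in> supp1 I \<nu> a" and s2: "-1 \<in> supp1 I \<nu> a"
  have p1: "prob I \<nu> (\<lambda>Y. Y a = 1) > 0" and p2: "prob I \<nu> (\<lambda>Y. Y a = -1) > 0"
    using s1 s2 unfolding supp1_def by auto
  have aI: "a \<in> I" using a by simp
  have e1: "prob I \<nu> (\<lambda>Y. Y a = 1 \<and> Y a = 1) = prob I \<nu> (\<lambda>Y. Y a = 1)" by (rule prob_cong) auto
  have e2: "prob I \<nu> (\<lambda>Y. Y a = -1 \<and> Y a = 1) = 0" by (rule prob_false) auto
  show "tv_coord I (cond I \<nu> (\<lambda>\<sigma>. \<sigma> a = 1)) (cond I \<nu> (\<lambda>\<sigma>. \<sigma> a = -1)) a \<le> 1"
    unfolding tv_cond[OF aI p1[THEN less_imp_neq, symmetric] p2[THEN less_imp_neq, symmetric]] e1 e2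
    using p1 a by simp
qed simp

end

context mctx begin

lemma tv_TT:
  assumes a: "a \<in> I - \<Lambda>" and b: "b \<in> I - \<Lambda>" and ab: "a \<noteq> b"
    and t1: "TT (\<tau>(a := 1)) > 0" and t2: "TT (\<tau>(a := -1)) > 0"
  shows "tv_coord I (cond I \<nu> (\<lambda>\<sigma>. \<sigma> a = 1)) (cond I \<nu> (\<lambda>\<sigma>. \<sigma> a = -1)) b
       = \<bar>TT (\<tau>(a := 1, b := 1)) / TT (\<tau>(a := 1)) - TT (\<tau>(a := -1, b := 1)) / TT (\<tau>(a := -1))\<bar>"
proof -
  have bI: "b \<in> I" using b by simp
  have p1: "prob I \<nu> (\<lambda>Y. Y a = 1) \<noteq> 0" using prob_nu1[OF a, of 1] t1 TT_tau_pos by simp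
  have p2: "prob I \<nu> (\<lambda>Y. Y a = -1) \<noteq> 0" using prob_nu1[OF a, of "-1"] t2 TT_tau_pos by simp
  have c1: "prob I \<nu> (\<lambda>\<sigma>. \<sigma> a = 1 \<and> \<sigma> b = 1) / prob I \<nu> (\<lambda>\<sigma>. \<sigma> a = 1) = TT (\<tau>(a := 1, b := 1)) / TT (\<tau>(a := 1))"
    using prob_cond[of I \<nu> "\<lambda>\<sigma>. \<sigma> a = 1" "\<lambda>\<sigma>. \<sigma> b = 1"] prob_nu2[OF a _ b _ ab, of 1 1] by simp
  have c2: "prob I \<nu> (\<lambda>\<sigma>. \<sigma> a = -1 \<and> \<sigma> b = 1) / prob I \<nu> (\<lambda>\<sigma>. \<sigma> a = -1) = TT (\<tau>(a := -1, b := 1)) / TT (\<tau>(a := -1))"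
    using prob_cond[of I \<nu> "\<lambda>\<sigma>. \<sigma> a = -1" "\<lambda>\<sigma>. \<sigma> b = 1"] prob_nu2[OF a _ b _ ab, of "-1" 1] by simp
  show ?thesis unfolding tv_cond[OF bI p1 p2] c1 c2 ..
qed

lemma Psi_off:
  assumes a: "a \<in> I - \<Lambda>" and b: "b \<in> I - \<Lambda>" and ab: "a \<noteq> b"
  shows "Psi I \<nu> a b \<le> Bd a b"
proof (rule Psi_le[OF supp1_ne Bd_nonneg])
  show "a \<in> I" "b \<in> I" using a b by auto
  assume s1: "1 \<in> supp1 I \<nu> a" and s2: "-1 \<in> supp1 I \<nu> a"
  have t1: "TT (\<tau>(a := 1)) > 0" using supp1_iff[OF a, of 1] s1 by simp
  have t2: "TT (\<tau>(a := -1)) > 0" using supp1_iff[OF a, of "-1"] s2 by simp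
  note tv = tv_TT[OF a b ab t1 t2]
  have aD: "fst a \<in> D" using dead1[OF a] t1 by auto
  obtain i j where ij: "a = (i,j)" "i \<in> N" "j \<in> {1..k}" "\<tau> (i,j) = 0" using IL_dest[OF a] by blast
  obtain i' j' where ij': "b = (i',j')" "i' \<in> N" "j' \<in> {1..k}" "\<tau> (i',j') = 0" using IL_dest[OF b] by blast
  have iD: "i \<in> D" using aD ij by simp
  have hz: "hz k \<tau> i" using D_hz[OF iD] .
  define la where "la = lam a / real k"
  define lb where "lb = lam b / real k"
  define L where "L = \<Phi> i 1"
  have L: "L > 0" using iD unfolding L_def D_def by simp
  have la0: "la > 0" using lam[of a] a kpos unfolding la_def by auto
  have lb0: "lb \<ge> 0" using lam[of b] b kpos unfolding lb_def by auto
  have las: "10 * la \<le> m" unfolding la_def using lam_small a by auto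
  have Pa1: "phiZ lam k (\<tau>(a := 1)) i 1 = la" "phiZ lam k (\<tau>(a := 1)) i (-1) = 0"
    using blk_plus[OF hz ij(3) ij(4), of lam] unfolding ij(1) la_def by auto
  have Pam: "phiZ lam k (\<tau>(a := -1)) i 1 = L - la" "phiZ lam k (\<tau>(a := -1)) i (-1) = 1"
    using blk_minus[OF hz ij(3) ij(4), of lam] unfolding ij(1) la_def L_def \<Phi>_def by auto
  have Lla: "L - la \<ge> 0" using Pam(1) phiZ_nonneg[of k lam i "\<tau>(a := -1)" 1] lamnn ij(2) by auto
  have loc1: "phiZ lam k (\<tau>(a := x)) l = \<Phi> l" if "l \<noteq> i" for x l
    unfolding \<Phi>_def using that ij(1) by (intro phiZ_local_upd) simp
  have F2: "TT (\<tau>(a := 1)) = la * T1 i" using TT_split1[OF ij(2) loc1] Pa1 by simp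
  have F4: "TT (\<tau>(a := -1)) = (L - la) * T1 i + Tm i" using TT_split1[OF ij(2) loc1] Pam by simp
  have u: "T1 i > 0" using t1 F2 la0 by (simp add: zero_less_mult_iff)
  have fl: "m * T1 i \<le> Tm i" using flipT[OF ij(2)] .
  show "tv_coord I (cond I \<nu> (\<lambda>\<sigma>. \<sigma> a = 1)) (cond I \<nu> (\<lambda>\<sigma>. \<sigma> a = -1)) b \<le> Bd a b"
  proof (cases "i' \<in> D")
    case False
    have "fst b \<notin> D" using False ij' by simp
    then have "TT (\<tau>(a := 1, b := 1)) = 0" "TT (\<tau>(a := -1, b := 1)) = 0" using dead2[OF a b ab] by auto
    then show ?thesis unfolding tv using Bd_nonneg[of b a] b by simp
  next
    case i'D: True
    show ?thesis
    proof (cases "i' = i")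
      case True
      have jj: "j \<noteq> j'" using ab ij ij' True by auto
      have b': "b = (i, j')" using ij' True by simp
      have z0: "TT (\<tau>(a := 1, b := 1)) = 0"
        unfolding TT_def ij(1) b' by (rule Tn_zero[OF N ij(2)]) (use blk_same_plus_plus[OF ij(3) ij'(3) jj, of lam \<tau> i] in auto)
      have loc2: "phiZ lam k (\<tau>(a := -1, b := 1)) l = \<Phi> l" if "l \<noteq> i" for l
        unfolding \<Phi>_def using that ij(1) b' by (intro phiZ_local) auto
      have Pb: "phiZ lam k (\<tau>(a := -1, b := 1)) i 1 = lb" "phiZ lam k (\<tau>(a := -1, b := 1)) i (-1) = 0"
        unfolding ij(1) b' lb_def
        using blk_same_minus_plus[OF hz ij(3) ij'(3) jj ij(4), of lam] ij'(4) True
          blk_same_plus_plus(2)[OF ij(3) ij'(3) jj, of lam \<tau> i "-1"] b' by auto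
      have F3: "TT (\<tau>(a := -1, b := 1)) = lb * T1 i" using TT_split1[OF ij(2) loc2] Pb by simp
      have "tv_coord I (cond I \<nu> (\<lambda>\<sigma>. \<sigma> a = 1)) (cond I \<nu> (\<lambda>\<sigma>. \<sigma> a = -1)) b
          = lb * T1 i / ((L - la) * T1 i + Tm i)"
        unfolding tv z0 F3 F4 using lb0 u Lla T1_nonneg Tm_nonneg by (simp add: abs_divide abs_mult)
      also have "\<dots> \<le> 10 / 9 * (lb / L * (Ab i i + 1))"
        by (rule alg_same[OF las fl T1_nonneg L Lla lb0 _ Ab_nonneg]) (use t2 F4 la0 in auto)
      also have "\<dots> = Bd a b" unfolding Bd_def pib_def using ab ij ij' True iD
        by (simp add: lb_def L_def)
      finally show ?thesis .
    next
      case False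
      have ii: "i \<noteq> i'" using False by simp
      define L' where "L' = \<Phi> i' 1"
      have L': "L' > 0" using i'D unfolding L'_def D_def by simp
      have hz': "hz k \<tau> i'" using D_hz[OF i'D] .
      have Pb1: "phiZ lam k (\<tau>(b := 1)) i' 1 = lb" "phiZ lam k (\<tau>(b := 1)) i' (-1) = 0"
        using blk_plus[OF hz' ij'(3) ij'(4), of lam] unfolding ij'(1) lb_def by auto
      define s where "s = Q i i' (dl 1) (dl 1)"
      define t where "t = Q i i' (dl (-1)) (dl 1)"
      have fa_i: "phiZ lam k (\<tau>(a := x, b := y)) i = phiZ lam k (\<tau>(a := x)) i" for x y
        using ij ij' ii by (intro phiZ_local_upd) simp
      have fb_i': "phiZ lam k (\<tau>(a := x, b := y)) i' = phiZ lam k (\<tau>(b := y)) i'" for x y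
      proof -
        have tw: "\<tau>(a := x, b := y) = (\<tau>(b := y))(a := x)" using ab by (rule fun_upd_twist)
        have "phiZ lam k ((\<tau>(b := y))(a := x)) i' = phiZ lam k (\<tau>(b := y)) i'"
          by (rule phiZ_local_upd) (use ij ii in simp)
        then show ?thesis unfolding tw .
      qed
      have loc3: "phiZ lam k (\<tau>(a := x, b := y)) l = \<Phi> l" if "l \<noteq> i" "l \<noteq> i'" for x y l
        unfolding \<Phi>_def using that ij(1) ij'(1) by (intro phiZ_local) auto
      have TTab: "TT (\<tau>(a := x, b := y)) = Q i i' (phiZ lam k (\<tau>(a := x)) i) (phiZ lam k (\<tau>(b := y)) i')" for x y
        using TT_split2[OF ii loc3] fa_i fb_i' by simp
      have Qb: "Q i i' (dl 1) (phiZ lam k (\<tau>(b := 1)) i') = lb * s"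
        "Q i i' (dl (-1)) (phiZ lam k (\<tau>(b := 1)) i') = lb * t"
        using Q_split_i'[OF ii ij'(2), of "dl 1" "phiZ lam k (\<tau>(b := 1)) i'"]
          Q_split_i'[OF ii ij'(2), of "dl (-1)" "phiZ lam k (\<tau>(b := 1)) i'"] Pb1 unfolding s_def t_def by simp_all
      have F1: "TT (\<tau>(a := 1, b := 1)) = la * lb * s"
        unfolding TTab using Q_split_i[OF ii ij(2), of "phiZ lam k (\<tau>(a := 1)) i" "phiZ lam k (\<tau>(b := 1)) i'"] Pa1 Qb by simp
      have F3: "TT (\<tau>(a := -1, b := 1)) = lb * ((L - la) * s + t)"
        unfolding TTab using Q_split_i[OF ii ij(2), of "phiZ lam k (\<tau>(a := -1)) i" "phiZ lam k (\<tau>(b := 1)) i'"] Pam Qb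
        by (simp add: algebra_simps)
      have Li: "\<Phi> i (-1) = 1" "\<Phi> i' (-1) = 1" using D_m1 iD i'D by auto
      have E1: "Q i i' (\<lambda>z. ind 1 z * \<Phi> i z) (\<lambda>z. ind 1 z * \<Phi> i' z) = L * L' * s"
      proof -
        have "Q i i' (dl 1) (\<lambda>z. ind 1 z * \<Phi> i' z) = L' * s"
          using Q_split_i'[OF ii ij'(2), of "dl 1" "\<lambda>z. ind 1 z * \<Phi> i' z"] unfolding s_def L'_def by (simp add: ind_def)
        then show ?thesis using Q_split_i[OF ii ij(2), of "\<lambda>z. ind 1 z * \<Phi> i z" "\<lambda>z. ind 1 z * \<Phi> i' z"] unfolding L_def by (simp add: ind_def)
      qed
      have E2: "Q i i' (\<lambda>z. ind 1 z * \<Phi> i z) (\<Phi> i') = L * T1 i"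
        using Q_split_i[OF ii ij(2), of "\<lambda>z. ind 1 z * \<Phi> i z" "\<Phi> i'"] Q_T1[OF ii] unfolding L_def by (simp add: ind_def)
      have E3: "Q i i' (\<Phi> i) (\<lambda>z. ind 1 z * \<Phi> i' z) = L' * (L * s + t)"
      proof -
        have "Q i i' (\<Phi> i) (dl 1) = L * s + t"
          using Q_split_i[OF ii ij(2), of "\<Phi> i" "dl 1"] Li unfolding s_def t_def L_def by simp
        then show ?thesis using Q_split_i'[OF ii ij'(2), of "\<Phi> i" "\<lambda>z. ind 1 z * \<Phi> i' z"] unfolding L'_def by (simp add: ind_def)
      qed
      have E4: "TT \<tau> = L * T1 i + Tm i"
        using TT_split1[OF ij(2), of \<tau>] Li unfolding L_def \<Phi>_def by simp
      have E2pos: "Q i i' (\<lambda>z. ind 1 z * \<Phi> i z) (\<Phi> i') > 0" unfolding E2 using L u by simp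
      have Ab: "Ab i i' = \<bar>L * L' * s / (L * T1 i) - L' * (L * s + t) / (L * T1 i + Tm i)\<bar>"
        unfolding Ab_def AbsCor_formula[OF ii iD i'D E2pos] E1 E2 E3 E4 ..
      have "tv_coord I (cond I \<nu> (\<lambda>\<sigma>. \<sigma> a = 1)) (cond I \<nu> (\<lambda>\<sigma>. \<sigma> a = -1)) b
          = \<bar>la * lb * s / (la * T1 i) - lb * ((L - la) * s + t) / ((L - la) * T1 i + Tm i)\<bar>"
        unfolding tv F1 F2 F3 F4 ..
      also have "\<dots> \<le> 10 / 9 * (lb / L' * Ab i i')"
        unfolding Ab by (rule alg_cross[OF las fl u L L' Lla la0 lb0])
      also have "\<dots> = Bd a b" unfolding Bd_def pib_def using ab ij ij' False iD i'D
        by (simp add: lb_def L'_def)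
      finally show ?thesis .
    qed
  qed
qed

end

lemma is_eig_shift:
  assumes S: "finite S" and e: "is_eig S (\<lambda>i j. M i j + (if i = j then 1 else 0)) l"
  shows "is_eig S M (l - 1)"
proof -
  obtain v where nz: "\<exists>i\<in>S. v i \<noteq> 0"
    and ev: "\<forall>i\<in>S. (\<Sum>j\<in>S. complex_of_real (M i j + (if i = j then 1 else 0)) * v j) = l * v i"
    using e unfolding is_eig_def by blast
  show ?thesis unfolding is_eig_def
  proof (intro exI conjI ballI)
    show "\<exists>i\<in>S. v i \<noteq> 0" by (rule nz)
    fix i assume i: "i \<in> S"
    have "(\<Sum>j\<in>S. complex_of_real (M i j + (if i = j then 1 else 0)) * v j)
        = (\<Sum>j\<in>S. complex_of_real (M i j) * v j) + (\<Sum>j\<in>S. (if i = j then v j else 0))"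
      unfolding sum.distrib[symmetric] by (rule sum.cong) (auto simp: distrib_right)
    also have "(\<Sum>j\<in>S. (if i = j then v j else 0)) = v i" using S i by simp
    finally have h: "(\<Sum>j\<in>S. complex_of_real (M i j) * v j) + v i = l * v i" using ev i by simp
    have "(\<Sum>j\<in>S. complex_of_real (M i j) * v j) = l * v i - v i"
      using h by (metis add_diff_cancel_right')
    then show "(\<Sum>j\<in>S. complex_of_real (M i j) * v j) = (l - 1) * v i"
      by (simp add: algebra_simps)
  qed
qed

context mctx begin

definition "Bm i i' = Ab i i' + (if i = i' then 1 else 0)"

lemma Bm_nonneg: "Bm i i' \<ge> 0" unfolding Bm_def using Ab_nonneg[of i i'] by simp

lemma Psi_abs: "a \<in> I - \<Lambda> \<Longrightarrow> b \<in> I - \<Lambda> \<Longrightarrow> \<bar>Psi I \<nu> a b\<bar> \<le> Bd a b"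
proof -
  assume a: "a \<in> I - \<Lambda>" and b: "b \<in> I - \<Lambda>"
  have nn: "Psi I \<nu> a b \<ge> 0" by (rule Psi_nonneg[OF supp1_ne]) (use a in simp)
  have "Psi I \<nu> a b \<le> Bd a b"
  proof (cases "a = b")
    case True
    have "Bd a a \<ge> 1"
      unfolding Bd_def using pib_nonneg[of a] Ab_nonneg a by (auto intro!: mult_nonneg_nonneg add_nonneg_nonneg)
    then show ?thesis using Psi_diag[OF a] True by simp
  next
    case False then show ?thesis using Psi_off[OF a b] by simp
  qed
  then show ?thesis using nn by simp
qed

lemma fI_L: "finite (I - \<Lambda>)" using fI by simp
lemma fD: "finite D" using N D_sub finite_subset by blast

lemma blockset:
  assumes i: "i \<in> D"
  shows "{b \<in> I - \<Lambda>. fst b = i} = (\<lambda>j. (i, j)) ` {j\<in>{1..k}. \<tau> (i, j) = 0}"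
proof -
  have iN: "i \<in> N" using i D_sub by auto
  have inL: "(i,j) \<in> \<Lambda> \<Longrightarrow> \<tau> (i,j) \<noteq> 0" for j using cube_val[OF tau_cube, of "(i,j)"] by auto
  show ?thesis
  proof (rule equalityI; rule subsetI)
    fix b assume "b \<in> {b \<in> I - \<Lambda>. fst b = i}"
    then show "b \<in> (\<lambda>j. (i, j)) ` {j\<in>{1..k}. \<tau> (i, j) = 0}" using tau_out by (cases b) auto
  next
    fix b assume "b \<in> (\<lambda>j. (i, j)) ` {j\<in>{1..k}. \<tau> (i, j) = 0}"
    then show "b \<in> {b \<in> I - \<Lambda>. fst b = i}" using iN inL by auto
  qed
qed

lemma pib_sum:
  assumes i: "i \<in> D"
  shows "(\<Sum>b\<in>{b \<in> I - \<Lambda>. fst b = i}. pib b) = 1"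
proof -
  have hz: "hz k \<tau> i" using D_hz[OF i] .
  have g: "gz k \<tau> i j \<longleftrightarrow> \<tau> (i,j) = 0" if j: "j \<in> {1..k}" for j
  proof
    assume "gz k \<tau> i j"
    then have "\<tau> (i,j) \<noteq> 0 \<longrightarrow> \<tau> (i,j) = 1" using j unfolding gz_def by auto
    moreover have "\<tau> (i,j) \<noteq> 0 \<longrightarrow> \<tau> (i,j) = -1" using hz j unfolding hz_def by auto
    ultimately show "\<tau> (i,j) = 0" by auto
  next
    assume "\<tau> (i,j) = 0"
    then show "gz k \<tau> i j" using hz unfolding gz_def hz_def by auto
  qed
  have L: "\<Phi> i 1 = (\<Sum>j\<in>{j\<in>{1..k}. \<tau> (i, j) = 0}. lam (i,j) / real k)"
  proof -
    have "\<Phi> i 1 = (\<Sum>j\<in>{1..k}. lam (i,j) / real k * (if gz k \<tau> i j then 1 else 0))"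
      by (simp add: \<Phi>_def phiZ_def)
    also have "\<dots> = (\<Sum>j\<in>{1..k}. if \<tau> (i, j) = 0 then lam (i,j) / real k else 0)"
      by (rule sum.cong) (auto simp: g)
    also have "\<dots> = (\<Sum>j\<in>{j\<in>{1..k}. \<tau> (i, j) = 0}. lam (i,j) / real k)"
      by (rule sum.inter_filter[symmetric]) simp
    finally show ?thesis .
  qed
  have Lpos: "\<Phi> i 1 > 0" using i by (simp add: D_def)
  have "(\<Sum>b\<in>{b \<in> I - \<Lambda>. fst b = i}. pib b) = (\<Sum>j\<in>{j\<in>{1..k}. \<tau> (i, j) = 0}. pib (i,j))"
    unfolding blockset[OF i] by (subst sum.reindex) (auto intro: inj_onI simp: o_def)
  also have "\<dots> = (\<Sum>j\<in>{j\<in>{1..k}. \<tau> (i, j) = 0}. lam (i,j) / real k) / \<Phi> i 1"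
    unfolding pib_def by (simp add: sum_divide_distrib)
  also have "\<dots> = 1" using L Lpos by simp
  finally show ?thesis .
qed

lemma pib_pos: "b \<in> I \<Longrightarrow> fst b \<in> D \<Longrightarrow> pib b > 0"
  unfolding pib_def using lam[of b] kpos by (auto simp: D_def)

lemma spec_main: "spec_radius (I - \<Lambda>) (Psi I \<nu>) \<le> 2 * \<eta> + 3"
proof (rule spec_radius_le)
  show "0 \<le> 2 * \<eta> + 3" using eta by simp
  fix c assume e: "is_eig (I - \<Lambda>) (Psi I \<nu>) c"
  define S where "S = I - \<Lambda>"
  have fS: "finite S" unfolding S_def using fI_L .
  obtain v where nz: "\<exists>a\<in>S. v a \<noteq> 0"
    and ev: "\<forall>a\<in>S. (\<Sum>b\<in>S. complex_of_real (Psi I \<nu> a b) * v b) = c * v a"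
    using e unfolding is_eig_def S_def by blast
  define w where "w b = cmod (v b)" for b
  have w0: "w b \<ge> 0" for b unfolding w_def by simp
  define u where "u i = (\<Sum>b\<in>{b\<in>S. fst b = i}. pib b * w b)" for i
  have u0: "u i \<ge> 0" for i unfolding u_def S_def using pib_nonneg w0 by (auto intro!: sum_nonneg mult_nonneg_nonneg)
  define Bu where "Bu i = (\<Sum>i'\<in>D. Bm i i' * u i')" for i
  have Bu0: "Bu i \<ge> 0" for i unfolding Bu_def using Bm_nonneg u0 by (auto intro!: sum_nonneg mult_nonneg_nonneg)
  have step1: "cmod c * w a \<le> (\<Sum>b\<in>S. Bd a b * w b)" if a: "a \<in> S" for a
  proof -
    have "cmod c * w a = cmod (\<Sum>b\<in>S. complex_of_real (Psi I \<nu> a b) * v b)"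
      using ev a unfolding w_def by (simp add: norm_mult)
    also have "\<dots> \<le> (\<Sum>b\<in>S. \<bar>Psi I \<nu> a b\<bar> * w b)"
      unfolding w_def by (rule order.trans[OF norm_sum]) (simp add: norm_mult)
    also have "\<dots> \<le> (\<Sum>b\<in>S. Bd a b * w b)"
      using Psi_abs a w0 unfolding S_def by (intro sum_mono mult_right_mono) auto
    finally show ?thesis .
  qed
  have step2: "(\<Sum>b\<in>S. Bd a b * w b) = w a + 10/9 * (if fst a \<in> D then Bu (fst a) else 0)" if a: "a \<in> S" for a
  proof -
    have "(\<Sum>b\<in>S. Bd a b * w b) = (\<Sum>b\<in>S. (if a = b then w b else 0))
        + 10/9 * (\<Sum>b\<in>S. (if fst a \<in> D \<and> fst b \<in> D then pib b * Bm (fst a) (fst b) * w b else 0))"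
      unfolding Bd_def Bm_def sum_distrib_left sum.distrib[symmetric] by (rule sum.cong) (auto simp: algebra_simps)
    also have "(\<Sum>b\<in>S. (if a = b then w b else 0)) = w a" using a fS by simp
    also have "(\<Sum>b\<in>S. (if fst a \<in> D \<and> fst b \<in> D then pib b * Bm (fst a) (fst b) * w b else 0))
        = (if fst a \<in> D then Bu (fst a) else 0)"
    proof (cases "fst a \<in> D")
      case False then show ?thesis by simp
    next
      case True
      have "(\<Sum>b\<in>S. (if fst b \<in> D then pib b * Bm (fst a) (fst b) * w b else 0))
          = (\<Sum>i'\<in>N. \<Sum>b\<in>{b\<in>S. fst b = i'}. (if fst b \<in> D then pib b * Bm (fst a) (fst b) * w b else 0))"
        by (rule sum.group[symmetric]) (use fS N in \<open>auto simp: S_def\<close>)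
      also have "\<dots> = (\<Sum>i'\<in>N. if i' \<in> D then Bm (fst a) i' * u i' else 0)"
        unfolding u_def sum_distrib_left by (rule sum.cong[OF refl]) (auto intro!: sum.cong simp: algebra_simps)
      also have "\<dots> = Bu (fst a)" unfolding Bu_def using D_sub N by (simp add: sum.inter_filter[symmetric] Int_absorb1 flip: sum.inter_filter) (metis (no_types) Collect_mem_eq D_sub inf.absorb_iff2 Collect_conj_eq)
      finally show ?thesis using True by simp
    qed
    finally show ?thesis .
  qed
  show "cmod c \<le> 2 * \<eta> + 3"
  proof (cases "cmod c \<le> 1")
    case True then show ?thesis using eta by simp
  next
    case False
    then have c1: "cmod c > 1" by simp
    have wnD: "w a = 0" if a: "a \<in> S" and nD: "fst a \<notin> D" for a
    proof -
      have "cmod c * w a \<le> w a" using step1[OF a] step2[OF a] nD by simp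
      then have "(cmod c - 1) * w a \<le> 0" by (simp add: algebra_simps)
      then show ?thesis using c1 w0[of a] by (simp add: mult_le_0_iff)
    qed
    obtain a0 where a0: "a0 \<in> S" "v a0 \<noteq> 0" using nz by blast
    have wa0: "w a0 > 0" using a0 unfolding w_def by simp
    have a0D: "fst a0 \<in> D" using wnD[OF a0(1)] wa0 by force
    have upos: "u (fst a0) > 0"
    proof -
      have fin0: "finite {b\<in>S. fst b = fst a0}" using fS by simp
      have "pib a0 * w a0 \<le> u (fst a0)" unfolding u_def
      proof (rule member_le_sum[OF _ _ fin0])
        show "a0 \<in> {b\<in>S. fst b = fst a0}" using a0 by simp
        fix x assume "x \<in> {b\<in>S. fst b = fst a0} - {a0}"
        then have "x \<in> I" by (simp add: S_def)
        then show "0 \<le> pib x * w x" using pib_nonneg w0 by (simp add: mult_nonneg_nonneg)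
      qed
      moreover have "pib a0 * w a0 > 0" using pib_pos[of a0] a0 a0D wa0 by (simp add: S_def)
      ultimately show ?thesis by linarith
    qed
    define r where "r = 9/10 * (cmod c - 1)"
    have rpos: "r > 0" using c1 unfolding r_def by simp
    have ru: "r * u i \<le> (\<Sum>i'\<in>D. Bm i i' * u i')" if i: "i \<in> D" for i
    proof -
      have bnd: "(cmod c - 1) * w b \<le> 10/9 * Bu i" if b: "b \<in> {b\<in>S. fst b = i}" for b
        using step1[of b] step2[of b] b i by (simp add: algebra_simps)
      have "(cmod c - 1) * u i = (\<Sum>b\<in>{b\<in>S. fst b = i}. pib b * ((cmod c - 1) * w b))"
        unfolding u_def sum_distrib_left by (simp add: algebra_simps)
      also have "\<dots> \<le> (\<Sum>b\<in>{b\<in>S. fst b = i}. pib b * (10/9 * Bu i))"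
        using bnd pib_nonneg by (intro sum_mono mult_left_mono) (auto simp: S_def)
      also have "\<dots> = (\<Sum>b\<in>{b\<in>S. fst b = i}. pib b) * (10/9 * Bu i)" by (rule sum_distrib_right[symmetric])
      also have "\<dots> = 10/9 * Bu i" using pib_sum[OF i] unfolding S_def by simp
      finally have "(cmod c - 1) * u i \<le> 10/9 * Bu i" .
      then show ?thesis unfolding r_def Bu_def by (simp add: algebra_simps)
    qed
    obtain l where l: "is_eig D Bm l" "r \<le> cmod l"
      using CW[OF fD _ _ a0D upos ru rpos] Bm_nonneg u0 by blast
    have "is_eig D Ab (l - 1)" using is_eig_shift[OF fD, of Ab l] l(1) unfolding Bm_def by simp
    then have "cmod (l - 1) \<le> spec_radius D Ab" by (rule le_spec_radius[OF fD])
    also have "\<dots> \<le> \<eta>" using A_spec unfolding Ab_def .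
    finally have "cmod (l - 1) \<le> \<eta>" .
    moreover have "cmod l \<le> cmod (l - 1) + 1" using norm_triangle_ineq[of "l - 1" 1] by simp
    ultimately have "r \<le> \<eta> + 1" using l(2) by linarith
    then show ?thesis unfolding r_def using eta by (simp add: algebra_simps)
  qed
qed

end

theorem lemma6p7:
  fixes n k :: nat and \<eta> \<epsilon> :: real and \<mu> :: "(nat \<Rightarrow> int) \<Rightarrow> real"
  assumes "\<eta> > 0" and "\<epsilon> > 0"
    and "is_dist {1..n} \<mu>"
    and "mu_min_neg {1..n} \<mu> > 0"
    and "complete_limited_correlation {1..n} \<eta> \<epsilon> \<mu>"
    and "real k \<ge> 10 * (1 + \<epsilon>) / mu_min_neg {1..n} \<mu>"
  shows "completely_SI ({1..n} \<times> {1..k}) (2 * \<eta> + 3) \<epsilon> (Rd {1..n} \<mu> k)"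
  unfolding completely_SI_def spectrally_independent_def
proof (intro allI impI ballI)
  fix lam :: "nat \<times> nat \<Rightarrow> real" and \<Lambda> and \<tau>
  assume lam: "\<forall>i\<in>{1..n} \<times> {1..k}. 0 < lam i \<and> lam i \<le> 1 + \<epsilon>"
    and L: "\<Lambda> \<subseteq> {1..n} \<times> {1..k}"
    and t: "\<tau> \<in> supp_marg ({1..n} \<times> {1..k}) (tilt ({1..n} \<times> {1..k}) lam (Rd {1..n} \<mu> k)) \<Lambda>"
  interpret mctx "{1..n}" \<mu> k lam \<epsilon> \<eta> \<Lambda> \<tau>
    by unfold_locales (use assms lam L t in auto)
  show "spec_radius ({1..n} \<times> {1..k} - \<Lambda>)
          (Psi ({1..n} \<times> {1..k}) (pin ({1..n} \<times> {1..k}) (tilt ({1..n} \<times> {1..k}) lam (Rd {1..n} \<mu> k)) \<Lambda> \<tau>))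
        \<le> 2 * \<eta> + 3"
    using spec_main unfolding \<nu>_def .
qed

end
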